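(* Assume (A1). Let $t>0$ and $x\in\mathbb{R}^n$ satisfy $$x\in\big(\mathrm{dom}\,J+t\,\mathrm{int}\,\mathrm{dom}\,H^*\big)\cap\big(t\,\mathrm{dom}\,H^*\big).$$ Then each of the two minimization problems $$\text{(P1)}\quad \min_{v\in\mathrm{int}\,\mathrm{dom}\,H^*}\Big\{tD_{H^*}\Big(\frac{x}{t},v\Big)+J^*(\nabla H^*(v))\Big\},\qquad \text{(P2)}\quad \min_{v\in\mathbb{R}^n}\{J(x-tv)+tH^*(v)\}$$ has a minimizer, the minimizer of each is unique, and the two minimizers coincide, i.e. $$\operatorname*{argmin}_{v\in\mathrm{int}\,\mathrm{dom}\,H^*}\Big\{tD_{H^*}\Big(\frac{x}{t},v\Big)+J^*(\nabla H^*(v))\Big\}=\operatorname*{argmin}_{v\in\mathbb{R}^n}\{J(x-tv)+tH^*(v)\}.$$ Moreover the minimal values satisfy $$\min_{v\in\mathrm{int}\,\mathrm{dom}\,H^*}\Big\{tD_{H^*}\Big(\frac{x}{t},v\Big)+J^*(\nabla H^*(v))\Big\}+\min_{v\in\mathbb{R}^n}\{J(x-tv)+tH^*(v)\}=(tH)^*(x)=tH^*\Big(\frac{x}{t}\Big).$$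
   Context: $\Gamma_0(\mathbb{R}^n)$ denotes the set of proper, convex, lower semicontinuous functions $\mathbb{R}^n\to\mathbb{R}\cup\{+\infty\}$. For $f\in\Gamma_0(\mathbb{R}^n)$, $\mathrm{dom}\,f=\{x: f(x)<+\infty\}$ and $f^*(p)=\sup_x\{\langle p,x\rangle-f(x)\}$ is the Legendre–Fenchel transform. A function $g$ is 1-coercive if $g(x)/\|x\|\to+\infty$ as $\|x\|\to\infty$. A function $f\in\Gamma_0(\mathbb{R}^n)$ is Legendre if: $\mathrm{int}\,\mathrm{dom}\,f\neq\emptyset$; $f$ is differentiable on $\mathrm{int}\,\mathrm{dom}\,f$; $\partial f(x)=\emptyset$ for $x\in\mathrm{dom}\,f\setminus\mathrm{int}\,\mathrm{dom}\,f$ and $\partial f(x)=\{\nabla f(x)\}$ for $x\in\mathrm{int}\,\mathrm{dom}\,f$; and $f$ is strictly convex on $\mathrm{int}\,\mathrm{dom}\,f$. For $x,u\in\mathrm{dom}\,f$ with $f$ differentiable at $u$, the Bregman distance is $D_f(x,u)=f(x)-f(u)-\langle\nabla f(u),x-u\rangle$. Assumption (A1): $J,H\in\Gamma_0(\mathbb{R}^n)$, $J$ is 1-coercive, and $H$ is a Legendre function (then $H^*$ is also Legendre and $\mathrm{dom}\,J^*=\mathbb{R}^n$). *)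

theory Defs
  imports "HOL-Analysis.Analysis"
begin

text \<open>Extended-real-valued functions on a Euclidean space; the value
  \<open>\<infinity>\<close> plays the role of \<open>+\<infinity>\<close>, properness forbids \<open>-\<infinity>\<close>.\<close>

definition edom :: "('a::euclidean_space \<Rightarrow> ereal) \<Rightarrow> 'a set" where
  "edom f = {x. f x < \<infinity>}"

definition proper_fun :: "('a::euclidean_space \<Rightarrow> ereal) \<Rightarrow> bool" where
  "proper_fun f \<longleftrightarrow> (\<forall>x. f x \<noteq> -\<infinity>) \<and> edom f \<noteq> {}"

definition econvex :: "('a::euclidean_space \<Rightarrow> ereal) \<Rightarrow> bool" where
  "econvex f \<longleftrightarrow> (\<forall>x y u. 0 < u \<and> u < 1 \<longrightarrow>
      f ((1 - u) *\<^sub>R x + u *\<^sub>R y) \<le> ereal (1 - u) * f x + ereal u * f y)"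

definition lsc :: "('a::euclidean_space \<Rightarrow> ereal) \<Rightarrow> bool" where
  "lsc f \<longleftrightarrow> (\<forall>x c. c < f x \<longrightarrow> (\<forall>\<^sub>F y in at x. c < f y))"

definition Gamma0 :: "('a::euclidean_space \<Rightarrow> ereal) set" where
  "Gamma0 = {f. proper_fun f \<and> econvex f \<and> lsc f}"

definition fconj :: "('a::euclidean_space \<Rightarrow> ereal) \<Rightarrow> 'a \<Rightarrow> ereal" where
  "fconj f p = (SUP x. ereal (p \<bullet> x) - f x)"

definition one_coercive :: "('a::euclidean_space \<Rightarrow> ereal) \<Rightarrow> bool" where
  "one_coercive g \<longleftrightarrow> ((\<lambda>x. g x / ereal (norm x)) \<longlongrightarrow> \<infinity>) at_infinity"

text \<open>Differentiability at an interior point of the domain: the (real-valued near x)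
  function has a Frechet derivative there; the gradient is the representing vector.\<close>
definition edifferentiable :: "('a::euclidean_space \<Rightarrow> ereal) \<Rightarrow> 'a \<Rightarrow> bool" where
  "edifferentiable f x \<longleftrightarrow> x \<in> interior (edom f) \<and>
     (\<lambda>y. real_of_ereal (f y)) differentiable (at x)"

definition egrad :: "('a::euclidean_space \<Rightarrow> ereal) \<Rightarrow> 'a \<Rightarrow> 'a" where
  "egrad f x = (SOME g. ((\<lambda>y. real_of_ereal (f y)) has_derivative (\<lambda>h. g \<bullet> h)) (at x))"

definition subdiff :: "('a::euclidean_space \<Rightarrow> ereal) \<Rightarrow> 'a \<Rightarrow> 'a set" where
  "subdiff f x = {p. x \<in> edom f \<and> (\<forall>y. f x + ereal (p \<bullet> (y - x)) \<le> f y)}"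

definition estrict_convex_on :: "'a::euclidean_space set \<Rightarrow> ('a \<Rightarrow> ereal) \<Rightarrow> bool" where
  "estrict_convex_on S f \<longleftrightarrow> (\<forall>x\<in>S. \<forall>y\<in>S. \<forall>u. x \<noteq> y \<and> 0 < u \<and> u < 1 \<longrightarrow>
      f ((1 - u) *\<^sub>R x + u *\<^sub>R y) < ereal (1 - u) * f x + ereal u * f y)"

definition legendre :: "('a::euclidean_space \<Rightarrow> ereal) \<Rightarrow> bool" where
  "legendre f \<longleftrightarrow> f \<in> Gamma0 \<and> interior (edom f) \<noteq> {}
     \<and> (\<forall>x\<in>interior (edom f). edifferentiable f x)
     \<and> (\<forall>x\<in>edom f - interior (edom f). subdiff f x = {})
     \<and> (\<forall>x\<in>interior (edom f). subdiff f x = {egrad f x})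
     \<and> estrict_convex_on (interior (edom f)) f"

text \<open>Bregman distance D_f(x,u) (used for x in dom f, f differentiable at u).\<close>
definition bregman :: "('a::euclidean_space \<Rightarrow> ereal) \<Rightarrow> 'a \<Rightarrow> 'a \<Rightarrow> ereal" where
  "bregman f x u = f x - f u - ereal (egrad f u \<bullet> (x - u))"

end

theory Submission
  imports Defs
begin

lemma proper_fin:
  assumes "proper_fun f" "y \<in> edom f"
  shows "f y = ereal (real_of_ereal (f y))"
  using assms unfolding proper_fun_def edom_def
  by (cases "f y") auto

lemma proper_cases:
  assumes "proper_fun f"
  obtains r where "f y = ereal r" | "f y = \<infinity>"
  using assms unfolding proper_fun_def by (cases "f y") auto

lemma econvex_dom:
  assumes "proper_fun f" "econvex f"
  shows "convex (edom f)"
  unfolding convex_alt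
proof (intro ballI allI impI)
  fix a b and u :: real
  assume a: "a \<in> edom f" and b: "b \<in> edom f" and u: "0 \<le> u \<and> u \<le> 1"
  show "(1 - u) *\<^sub>R a + u *\<^sub>R b \<in> edom f"
  proof (cases "u = 0 \<or> u = 1")
    case True then show ?thesis using a b by auto
  next
    case False
    then have "0 < u" "u < 1" using u by auto
    then have "f ((1 - u) *\<^sub>R a + u *\<^sub>R b) \<le> ereal (1 - u) * f a + ereal u * f b"
      using assms(2) unfolding econvex_def by blast
    also have "\<dots> = ereal ((1-u) * real_of_ereal (f a) + u * real_of_ereal (f b))"
      using proper_fin[OF assms(1) a] proper_fin[OF assms(1) b]
      by (metis plus_ereal.simps(1) times_ereal.simps(1))
    finally show ?thesis unfolding edom_def by (auto intro: le_less_trans)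
  qed
qed

lemma econvex_convex_on:
  assumes "proper_fun f" "econvex f"
  shows "convex_on (edom f) (\<lambda>y. real_of_ereal (f y))"
proof (rule convex_onI)
  fix u :: real and a b
  assume u: "0 < u" "u < 1" and a: "a \<in> edom f" and b: "b \<in> edom f"
  have m: "(1 - u) *\<^sub>R a + u *\<^sub>R b \<in> edom f"
    using econvex_dom[OF assms] a b u unfolding convex_alt by auto
  have "f ((1 - u) *\<^sub>R a + u *\<^sub>R b) \<le> ereal (1 - u) * f a + ereal u * f b"
    using assms(2) u unfolding econvex_def by blast
  also have "\<dots> = ereal ((1-u) * real_of_ereal (f a) + u * real_of_ereal (f b))"
    using proper_fin[OF assms(1) a] proper_fin[OF assms(1) b]
    by (metis plus_ereal.simps(1) times_ereal.simps(1))
  finally show "real_of_ereal (f ((1 - u) *\<^sub>R a + u *\<^sub>R b))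
        \<le> (1 - u) * real_of_ereal (f a) + u * real_of_ereal (f b)"
    using proper_fin[OF assms(1) m] by (metis ereal_less_eq(3))
qed (rule econvex_dom[OF assms])

lemma ext_minorant:
  fixes f :: "'a::euclidean_space \<Rightarrow> real"
  assumes cf: "convex_on D f" and w0: "w0 \<in> interior D" and v: "v \<in> D"
    and min: "\<And>y. y \<in> interior D \<Longrightarrow> \<alpha> + g \<bullet> y \<le> f y"
  shows "\<alpha> + g \<bullet> v \<le> f v"
proof (rule ccontr)
  assume "\<not> ?thesis"
  then have d: "\<delta> > 0" if "\<delta> = \<alpha> + g \<bullet> v - f v" for \<delta> using that by auto
  define \<delta> where "\<delta> = \<alpha> + g \<bullet> v - f v"
  have dp: "\<delta> > 0" using d \<delta>_def by auto
  define B where "B = \<bar>f w0 - \<alpha> - g \<bullet> w0\<bar> + \<delta>"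
  have Bp: "B > 0" using dp B_def by auto
  define s where "s = \<delta> / (4 * B)"
  have s0: "0 < s" using dp Bp s_def by auto
  have "\<delta> \<le> B" using B_def by simp
  then have s1: "s \<le> 1/4" unfolding s_def using Bp by (simp add: field_simps)
  have cD: "convex D" using cf convex_on_def by blast
  have "v - s *\<^sub>R (v - w0) \<in> interior D"
    using mem_interior_closure_convex_shrink[OF cD w0 closure_subset[THEN subsetD, OF v] s0] s1 by auto
  moreover have eq: "v - s *\<^sub>R (v - w0) = (1 - s) *\<^sub>R v + s *\<^sub>R w0" by (simp add: algebra_simps)
  ultimately have i: "(1 - s) *\<^sub>R v + s *\<^sub>R w0 \<in> interior D" by simp
  have "\<alpha> + g \<bullet> ((1 - s) *\<^sub>R v + s *\<^sub>R w0) \<le> f ((1 - s) *\<^sub>R v + s *\<^sub>R w0)" using min[OF i] .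
  also have "\<dots> \<le> (1 - s) * f v + s * f w0"
    using convex_onD[OF cf, of s v w0] s0 s1 v interior_subset w0 by auto
  finally have "(1 - s) * (\<alpha> + g \<bullet> v - f v) + s * (\<alpha> + g \<bullet> w0 - f w0) \<le> 0"
    by (simp add: inner_add_right algebra_simps)
  then have "(1 - s) * \<delta> \<le> s * (f w0 - \<alpha> - g \<bullet> w0)" unfolding \<delta>_def by (simp add: algebra_simps)
  also have "\<dots> \<le> s * B" using s0 B_def dp by (intro mult_left_mono) auto
  also have "\<dots> = \<delta> / 4" using Bp s_def by simp
  finally have "(1 - s) * \<delta> \<le> \<delta> / 4" .
  moreover have "(1 - s) * \<delta> \<ge> (3/4) * \<delta>" using s1 dp by (intro mult_right_mono) auto
  ultimately show False using dp by linarith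
qed


lemma fconj_upper: "ereal (p \<bullet> y) - f y \<le> fconj f p"
  unfolding fconj_def by (rule SUP_upper) simp

lemma fconj_least: "(\<And>y. ereal (p \<bullet> y) - f y \<le> c) \<Longrightarrow> fconj f p \<le> c"
  unfolding fconj_def by (rule SUP_least) simp

lemma epi_convex:
  assumes "proper_fun f" "econvex f"
  shows "convex {z::'a::euclidean_space \<times> real. f (fst z) \<le> ereal (snd z)}"
  unfolding convex_alt
proof (intro ballI allI impI, clarsimp)
  fix y1 r1 y2 r2 and u :: real
  assume 1: "f y1 \<le> ereal r1" and 2: "f y2 \<le> ereal r2" and u: "0 \<le> u" "u \<le> 1"
  show "f ((1 - u) *\<^sub>R y1 + u *\<^sub>R y2) \<le> ereal ((1 - u) * r1 + u * r2)"
  proof (cases "u = 0 \<or> u = 1")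
    case True then show ?thesis using 1 2 by auto
  next
    case False
    then have "0 < u" "u < 1" using u by auto
    then have "f ((1 - u) *\<^sub>R y1 + u *\<^sub>R y2) \<le> ereal (1 - u) * f y1 + ereal u * f y2"
      using assms(2) unfolding econvex_def by blast
    also have "\<dots> \<le> ereal (1 - u) * ereal r1 + ereal u * ereal r2"
      using 1 2 u by (intro add_mono ereal_mult_left_mono) auto
    finally show ?thesis by simp
  qed
qed

lemma epi_closed:
  assumes "lsc f"
  shows "closed {z::'a::euclidean_space \<times> real. f (fst z) \<le> ereal (snd z)}"
  unfolding closed_def
proof (subst open_subopen, intro ballI)
  fix z assume "z \<in> - {z::'a \<times> real. f (fst z) \<le> ereal (snd z)}"
  then obtain y r where z: "z = (y, r)" and fy: "ereal r < f y" by (cases z) auto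
  obtain c where c1: "ereal r < ereal c" and c2: "ereal c < f y" using ereal_dense2[OF fy] by blast
  have "\<forall>\<^sub>F y' in at y. ereal c < f y'" using assms c2 unfolding lsc_def by blast
  then obtain S where S: "open S" "y \<in> S" "\<And>y'. y' \<in> S \<Longrightarrow> y' \<noteq> y \<Longrightarrow> ereal c < f y'"
    unfolding eventually_at_topological by blast
  show "\<exists>T. open T \<and> z \<in> T \<and> T \<subseteq> - {z. f (fst z) \<le> ereal (snd z)}"
  proof (intro exI conjI)
    show "open (S \<times> {..<c})" using S(1) by (intro open_Times) auto
    show "z \<in> S \<times> {..<c}" using z S(2) c1 by auto
    show "S \<times> {..<c} \<subseteq> - {z. f (fst z) \<le> ereal (snd z)}"
    proof clarsimp
      fix y' r' assume "y' \<in> S" "r' < c" "f y' \<le> ereal r'"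
      moreover have "ereal c < f y'" using S(3)[of y'] c2 \<open>y' \<in> S\<close> by (cases "y' = y") auto
      ultimately have "f y' < ereal c" and "ereal c < f y'"
        using le_less_trans[of "f y'" "ereal r'" "ereal c"] by auto
      then show False by simp
    qed
  qed
qed

lemma fenchel_moreau:
  fixes f :: "'a::euclidean_space \<Rightarrow> ereal"
  assumes G: "f \<in> Gamma0" and sg: "p0 \<in> subdiff f u0"
  shows "f u \<le> fconj (fconj f) u"
proof (rule ccontr)
  have pf: "proper_fun f" and cf: "econvex f" and lf: "lsc f" using G unfolding Gamma0_def by auto
  assume "\<not> f u \<le> fconj (fconj f) u"
  then obtain \<alpha> where a1: "fconj (fconj f) u < ereal \<alpha>" and a2: "ereal \<alpha> < f u"
    by (meson ereal_dense2 not_le)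
  define E where "E = {z::'a \<times> real. f (fst z) \<le> ereal (snd z)}"
  have cE: "convex E" unfolding E_def by (rule epi_convex[OF pf cf])
  have clE: "closed E" unfolding E_def by (rule epi_closed[OF lf])
  have nE: "(u, \<alpha>) \<notin> E" using a2 unfolding E_def by auto
  from separating_hyperplane_closed_point[OF cE clE nE]
  obtain ab c where s1: "ab \<bullet> (u, \<alpha>) < c" and s2': "\<forall>z\<in>E. ab \<bullet> z > c"
    by blast
  have s2: "\<And>z. z \<in> E \<Longrightarrow> ab \<bullet> z > c" using s2' by blast
  obtain a b where ab: "ab = (a, b)" by (cases ab)
  have s1': "a \<bullet> u + b * \<alpha> < c" using s1 ab by simp
  have s2': "c < a \<bullet> y + b * r" if "f y \<le> ereal r" for y r
    using s2[of "(y, r)"] that ab unfolding E_def by simp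
  have fin: "f y = ereal (real_of_ereal (f y))" if "f y \<noteq> \<infinity>" for y
    using pf that unfolding proper_fun_def by (cases "f y") auto
  obtain w where w: "ereal \<alpha> < ereal (u \<bullet> w) - fconj f w"
  proof -
    consider "b > 0" | "b < 0" | "b = 0" by linarith
    then show ?thesis
    proof cases
      case 1
      define w where "w = (- 1 / b) *\<^sub>R a"
      have "fconj f w \<le> ereal (- c / b)"
      proof (rule fconj_least)
        fix y
        show "ereal (w \<bullet> y) - f y \<le> ereal (- c / b)"
        proof (cases "f y = \<infinity>")
          case False
          then have "c < a \<bullet> y + b * real_of_ereal (f y)" using s2' fin by simp
          then have "c / b \<le> (a \<bullet> y + b * real_of_ereal (f y)) / b"
            using 1 by (intro divide_right_mono) auto
          moreover have "w \<bullet> y - real_of_ereal (f y) = - ((a \<bullet> y + b * real_of_ereal (f y)) / b)"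
            using 1 unfolding w_def by (simp add: field_simps)
          ultimately have "w \<bullet> y - real_of_ereal (f y) \<le> - c / b" by simp
          then show ?thesis by (subst fin[OF False]) simp
        qed simp
      qed
      moreover have "\<alpha> < u \<bullet> w + c / b" using s1' 1 unfolding w_def
        by (simp add: field_simps inner_commute)
      ultimately have "ereal \<alpha> < ereal (u \<bullet> w) - fconj f w"
        by (cases "fconj f w") auto
      then show ?thesis by (rule that)
    next
      case 2
      obtain y0 where y0: "f y0 < \<infinity>" using pf unfolding proper_fun_def edom_def by auto
      define r where "r = \<bar>real_of_ereal (f y0)\<bar> + \<bar>a \<bullet> y0 - c\<bar> / (- b) + 1"
      have "real_of_ereal (f y0) \<le> r"
      proof -
        have "0 \<le> \<bar>a \<bullet> y0 - c\<bar> / (- b)" using 2 by (intro divide_nonneg_pos) auto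
        then show "real_of_ereal (f y0) \<le> r" using abs_ge_self[of "real_of_ereal (f y0)"] unfolding r_def by linarith
      qed
      then have "f y0 \<le> ereal r" using y0 by (subst fin[of y0]) auto
      then have "c < a \<bullet> y0 + b * r" by (rule s2')
      moreover have "b * r \<le> - \<bar>a \<bullet> y0 - c\<bar>"
      proof -
        have "b * r = b * (\<bar>real_of_ereal (f y0)\<bar> + 1) - \<bar>a \<bullet> y0 - c\<bar>"
          unfolding r_def using 2 by (simp add: field_simps)
        moreover have "b * (\<bar>real_of_ereal (f y0)\<bar> + 1) \<le> 0"
        proof -
          have "0 \<le> \<bar>real_of_ereal (f y0)\<bar> + 1" using abs_ge_zero[of "real_of_ereal (f y0)"] by linarith
          moreover have "b \<le> 0" using 2 by simp
          ultimately show ?thesis using mult_nonpos_nonneg by blast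
        qed
        ultimately show ?thesis by linarith
      qed
      ultimately show ?thesis by linarith
    next
      case 3
      have sa: "c < a \<bullet> y" if "f y \<noteq> \<infinity>" for y
        using s2'[of y "real_of_ereal (f y)"] fin[OF that] 3 by simp
      have u0d: "f u0 \<noteq> \<infinity>" and sgi: "\<And>y. f u0 + ereal (p0 \<bullet> (y - u0)) \<le> f y"
        using sg unfolding subdiff_def edom_def by auto
      define r0 where "r0 = real_of_ereal (f u0)"
      have fu0: "f u0 = ereal r0" using fin[OF u0d] r0_def by simp
      define d where "d = p0 \<bullet> u + r0 - p0 \<bullet> u0"
      have cp: "c - a \<bullet> u > 0" using s1' 3 by simp
      define lam where "lam = (\<bar>\<alpha>\<bar> + \<bar>d\<bar> + 1) / (c - a \<bullet> u)"
      have lp: "lam > 0" using cp unfolding lam_def by simp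
      have le: "lam * (c - a \<bullet> u) = \<bar>\<alpha>\<bar> + \<bar>d\<bar> + 1" using cp unfolding lam_def by simp
      define w where "w = p0 - lam *\<^sub>R a"
      have "fconj f w \<le> ereal (- r0 + p0 \<bullet> u0 - lam * c)"
      proof (rule fconj_least)
        fix y
        show "ereal (w \<bullet> y) - f y \<le> ereal (- r0 + p0 \<bullet> u0 - lam * c)"
        proof (cases "f y = \<infinity>")
          case False
          have "ereal (r0 + p0 \<bullet> (y - u0)) \<le> f y" using sgi[of y] fu0 by simp
          then have ry: "r0 + p0 \<bullet> (y - u0) \<le> real_of_ereal (f y)"
            by (subst (asm) fin[OF False]) simp
          have "lam * c \<le> lam * (a \<bullet> y)" using sa[OF False] lp by simp
          then have "w \<bullet> y - real_of_ereal (f y) \<le> - r0 + p0 \<bullet> u0 - lam * c"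
            using ry unfolding w_def by (simp add: inner_diff_left inner_diff_right)
          then show ?thesis by (subst fin[OF False]) simp
        qed simp
      qed
      moreover have "\<alpha> < u \<bullet> w + r0 - p0 \<bullet> u0 + lam * c"
      proof -
        have "u \<bullet> w + r0 - p0 \<bullet> u0 + lam * c = d + lam * (c - a \<bullet> u)"
          unfolding w_def d_def by (simp add: algebra_simps inner_commute)
        then show ?thesis using le by linarith
      qed
      ultimately have "ereal \<alpha> < ereal (u \<bullet> w) - fconj f w"
        by (cases "fconj f w") auto
      then show ?thesis by (rule that)
    qed
  qed
  have "ereal (u \<bullet> w) - fconj f w \<le> fconj (fconj f) u" by (rule fconj_upper)
  then show False using w a1 by simp
qed


lemma fconj_not_minf:
  assumes "proper_fun f" shows "fconj f p \<noteq> -\<infinity>"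
proof -
  obtain y0 where y0: "f y0 < \<infinity>" using assms unfolding proper_fun_def edom_def by auto
  then obtain r where "f y0 = ereal r" using assms unfolding proper_fun_def by (cases "f y0") auto
  then have "ereal (p \<bullet> y0 - r) \<le> fconj f p" using fconj_upper[of p y0 f] by simp
  then show ?thesis by auto
qed

lemma fconj_econvex:
  assumes pf: "proper_fun f" shows "econvex (fconj f)"
  unfolding econvex_def
proof (intro allI impI)
  fix a b and u :: real
  assume u: "0 < u \<and> u < 1"
  let ?K = "fconj f"
  have nm: "?K a \<noteq> -\<infinity>" "?K b \<noteq> -\<infinity>" using fconj_not_minf[OF pf] by auto
  show "?K ((1 - u) *\<^sub>R a + u *\<^sub>R b) \<le> ereal (1 - u) * ?K a + ereal u * ?K b"
  proof (cases "?K a = \<infinity> \<or> ?K b = \<infinity>")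
    case True
    then have e: "ereal (1 - u) * ?K a + ereal u * ?K b = \<infinity>" using u nm
      by (cases "?K a"; cases "?K b") (auto simp: ereal_mult_infty)
    show ?thesis by (simp only: e ereal_less_eq(1))
  next
    case False
    then obtain ka kb where ka: "?K a = ereal ka" and kb: "?K b = ereal kb" using nm
      by (cases "?K a"; cases "?K b") auto
    have "?K ((1 - u) *\<^sub>R a + u *\<^sub>R b) \<le> ereal ((1 - u) * ka + u * kb)"
    proof (rule fconj_least)
      fix y
      show "ereal (((1 - u) *\<^sub>R a + u *\<^sub>R b) \<bullet> y) - f y \<le> ereal ((1 - u) * ka + u * kb)"
      proof (cases "f y")
        case (real h)
        have "ereal (a \<bullet> y) - f y \<le> ?K a" "ereal (b \<bullet> y) - f y \<le> ?K b" by (rule fconj_upper)+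
        then have "a \<bullet> y - h \<le> ka" "b \<bullet> y - h \<le> kb" using real ka kb by auto
        then have "(1 - u) * (a \<bullet> y - h) + u * (b \<bullet> y - h) \<le> (1 - u) * ka + u * kb"
          using u by (intro add_mono mult_left_mono) auto
        then show ?thesis using real by (simp add: inner_add_left algebra_simps)
      qed (use pf in \<open>auto simp: proper_fun_def\<close>)
    qed
    then show ?thesis using ka kb by simp
  qed
qed

lemma fconj_lsc: assumes pf: "proper_fun f" shows "lsc (fconj f)"
  unfolding lsc_def
proof (intro allI impI)
  fix v c assume "c < fconj f v"
  then obtain y where y: "c < ereal (v \<bullet> y) - f y" unfolding fconj_def by (auto simp: less_SUP_iff)
  then obtain h where h: "f y = ereal h" using pf unfolding proper_fun_def by (cases "f y") auto
  obtain c' where c1: "c < ereal c'" and c2: "ereal c' < ereal (v \<bullet> y - h)" using ereal_dense2[of c "ereal (v \<bullet> y - h)"] y h by auto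
  have "((\<lambda>v'. v' \<bullet> y - h) \<longlongrightarrow> v \<bullet> y - h) (at v)" by (intro tendsto_intros)
  then have "\<forall>\<^sub>F v' in at v. c' < v' \<bullet> y - h" using c2 by (intro order_tendstoD(1)) auto
  then show "\<forall>\<^sub>F v' in at v. c < fconj f v'"
  proof (rule eventually_mono)
    fix v' assume "c' < v' \<bullet> y - h"
    then have "ereal c' < ereal (v' \<bullet> y) - f y" using h by simp
    also have "\<dots> \<le> fconj f v'" by (rule fconj_upper)
    finally show "c < fconj f v'" using c1 by simp
  qed
qed

context
  fixes H :: "'a::euclidean_space \<Rightarrow> ereal"
  assumes HG: "H \<in> Gamma0" and Hleg: "legendre H"
begin

lemma H_proper: "proper_fun H" using HG unfolding Gamma0_def by auto

lemma H_subgrad_ex: "\<exists>p0 u0. p0 \<in> subdiff H u0"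
  using Hleg unfolding legendre_def by blast

lemma K_not_minf: "fconj H p \<noteq> -\<infinity>" by (rule fconj_not_minf[OF H_proper])

lemma K_proper: "proper_fun (fconj H)"
proof -
  obtain p0 u0 where sg: "p0 \<in> subdiff H u0" using H_subgrad_ex by blast
  then have d: "H u0 < \<infinity>" and i: "\<And>y. H u0 + ereal (p0 \<bullet> (y - u0)) \<le> H y"
    unfolding subdiff_def edom_def by auto
  obtain r where r: "H u0 = ereal r" using d H_proper unfolding proper_fun_def by (cases "H u0") auto
  have "fconj H p0 \<le> ereal (p0 \<bullet> u0 - r)"
  proof (rule fconj_least)
    fix y show "ereal (p0 \<bullet> y) - H y \<le> ereal (p0 \<bullet> u0 - r)"
      using i[of y] r by (cases "H y") (auto simp: inner_diff_right)
  qed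
  then have "fconj H p0 < \<infinity>" by (rule le_less_trans) simp
  then show ?thesis using K_not_minf unfolding proper_fun_def edom_def by blast
qed

lemma K_econvex: "econvex (fconj H)" by (rule fconj_econvex[OF H_proper])

lemma K_Gamma0: "fconj H \<in> Gamma0"
  unfolding Gamma0_def using K_proper K_econvex fconj_lsc[OF H_proper] by auto

lemma FY: "ereal (u \<bullet> v) - H u \<le> fconj H v"
  by (subst inner_commute) (rule fconj_upper)

lemma K_subgrad_dual:
  assumes "u \<in> subdiff (fconj H) w"
  shows "H u = ereal (u \<bullet> w - real_of_ereal (fconj H w))"
    and "u \<in> interior (edom H)" and "w \<in> subdiff H u"
proof -
  let ?K = "fconj H"
  have wd: "?K w < \<infinity>" and si: "\<And>z. ?K w + ereal (u \<bullet> (z - w)) \<le> ?K z"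
    using assms unfolding subdiff_def edom_def by auto
  obtain kw where kw: "?K w = ereal kw" using wd K_not_minf by (cases "?K w") auto
  obtain p0 u0 where sg: "p0 \<in> subdiff H u0" using H_subgrad_ex by blast
  have "H u \<le> fconj ?K u" by (rule fenchel_moreau[OF HG sg])
  also have "\<dots> \<le> ereal (u \<bullet> w - kw)"
  proof (rule fconj_least)
    fix z show "ereal (u \<bullet> z) - ?K z \<le> ereal (u \<bullet> w - kw)"
      using si[of z] kw by (cases "?K z") (auto simp: inner_diff_right)
  qed
  finally have le: "H u \<le> ereal (u \<bullet> w - kw)" .
  have ge: "ereal (u \<bullet> w) - H u \<le> ereal kw" using FY[of u w] kw by simp
  have Hu: "H u = ereal (u \<bullet> w - kw)"
  proof (cases "H u")
    case (real h) then show ?thesis using le ge by simp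
  next
    case PInf then show ?thesis using le by simp
  next
    case MInf then show ?thesis using H_proper unfolding proper_fun_def by simp
  qed
  then show "H u = ereal (u \<bullet> w - real_of_ereal (?K w))" using kw by simp
  have ud: "u \<in> edom H" using Hu unfolding edom_def by simp
  show sw: "w \<in> subdiff H u"
    unfolding subdiff_def
  proof (intro CollectI conjI allI ud)
    fix y
    have "ereal (y \<bullet> w) - H y \<le> ereal kw" using FY[of y w] kw by simp
    have c: "y \<bullet> w = w \<bullet> y" "u \<bullet> w = w \<bullet> u" by (simp_all add: inner_commute)
    show "H u + ereal (w \<bullet> (y - u)) \<le> H y" using Hu \<open>ereal (y \<bullet> w) - H y \<le> ereal kw\<close>
      by (cases "H y") (auto simp: inner_diff_right c)
  qed
  show "u \<in> interior (edom H)"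
  proof (rule ccontr)
    assume "u \<notin> interior (edom H)"
    then have "subdiff H u = {}" using Hleg ud unfolding legendre_def by blast
    then show False using sw by simp
  qed
qed

lemma K_subgrad_unique:
  assumes "u1 \<in> subdiff (fconj H) w" "u2 \<in> subdiff (fconj H) w"
  shows "u1 = u2"
proof (rule ccontr)
  assume ne: "u1 \<noteq> u2"
  let ?K = "fconj H"
  define kw where "kw = real_of_ereal (?K w)"
  have h1: "H u1 = ereal (u1 \<bullet> w - kw)" and i1: "u1 \<in> interior (edom H)"
    using K_subgrad_dual[OF assms(1)] kw_def by auto
  have h2: "H u2 = ereal (u2 \<bullet> w - kw)" and i2: "u2 \<in> interior (edom H)"
    using K_subgrad_dual[OF assms(2)] kw_def by auto
  have wd: "?K w < \<infinity>" using assms(1) unfolding subdiff_def edom_def by auto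
  then have kw: "?K w = ereal kw" using K_not_minf kw_def by (cases "?K w") auto
  define m where "m = (1 - 1/2) *\<^sub>R u1 + (1/2::real) *\<^sub>R u2"
  have sc: "estrict_convex_on (interior (edom H)) H" using Hleg unfolding legendre_def by blast
  have "H m < ereal (1 - 1/2) * H u1 + ereal (1/2) * H u2"
    using sc[unfolded estrict_convex_on_def, rule_format, OF i1 i2, of "1/2"] ne unfolding m_def by simp
  also have "\<dots> = ereal (m \<bullet> w - kw)" using h1 h2 unfolding m_def
    by (simp add: inner_add_left field_simps)
  finally have "H m < ereal (m \<bullet> w - kw)" .
  moreover have "ereal (m \<bullet> w) - H m \<le> ereal kw" using FY[of m w] kw by simp
  ultimately show False by (cases "H m") auto
qed

end


lemma subdiff_real:
  assumes pf: "proper_fun f" and p: "p \<in> subdiff f y" and z: "z \<in> edom f"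
  shows "real_of_ereal (f y) + p \<bullet> (z - y) \<le> real_of_ereal (f z)"
proof -
  have y: "y \<in> edom f" and i: "f y + ereal (p \<bullet> (z - y)) \<le> f z" using p unfolding subdiff_def by auto
  show ?thesis using i proper_fin[OF pf y] proper_fin[OF pf z]
    by (metis ereal_less_eq(3) plus_ereal.simps(1))
qed

lemma subdiff_from_real:
  assumes pf: "proper_fun f" and y: "y \<in> edom f"
    and i: "\<And>z. z \<in> edom f \<Longrightarrow> real_of_ereal (f y) + p \<bullet> (z - y) \<le> real_of_ereal (f z)"
  shows "p \<in> subdiff f y"
  unfolding subdiff_def
proof (intro CollectI conjI allI y)
  fix z
  show "f y + ereal (p \<bullet> (z - y)) \<le> f z"
  proof (cases "z \<in> edom f")
    case True
    then show ?thesis using i[OF True] proper_fin[OF pf y] proper_fin[OF pf True]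
      by (metis ereal_less_eq(3) plus_ereal.simps(1))
  next
    case False
    then have "f z = \<infinity>" unfolding edom_def by simp
    then show ?thesis by simp
  qed
qed

lemma subgrad_interior:
  fixes f :: "'a::euclidean_space \<Rightarrow> ereal"
  assumes pf: "proper_fun f" and cf: "econvex f" and v: "v \<in> interior (edom f)"
  shows "\<exists>u. u \<in> subdiff f v"
proof -
  let ?D = "edom f" and ?k = "\<lambda>y. real_of_ereal (f y)"
  have cD: "convex ?D" by (rule econvex_dom[OF pf cf])
  have ck: "convex_on ?D ?k" by (rule econvex_convex_on[OF pf cf])
  have ckI: "convex_on (interior ?D) ?k" using convex_on_subset[OF ck interior_subset] convex_interior[OF cD] by blast
  define T where "T = {z. fst z \<in> interior ?D \<and> ?k (fst z) < snd z}"
  have cT: "convex T"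
    unfolding convex_alt T_def
  proof (intro ballI allI impI, clarsimp)
    fix y1 r1 y2 r2 and u :: real
    assume a: "y1 \<in> interior ?D" "?k y1 < r1" "y2 \<in> interior ?D" "?k y2 < r2" "0 \<le> u" "u \<le> 1"
    show "(1 - u) *\<^sub>R y1 + u *\<^sub>R y2 \<in> interior ?D \<and>
          ?k ((1 - u) *\<^sub>R y1 + u *\<^sub>R y2) < (1 - u) * r1 + u * r2"
    proof
      show "(1 - u) *\<^sub>R y1 + u *\<^sub>R y2 \<in> interior ?D"
        using convex_interior[OF cD] a unfolding convex_alt by blast
      have "?k ((1 - u) *\<^sub>R y1 + u *\<^sub>R y2) \<le> (1 - u) * ?k y1 + u * ?k y2"
        using convex_onD[OF ckI] a by blast
      also have "\<dots> < (1 - u) * r1 + u * r2"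
      proof (cases "u = 0")
        case True then show ?thesis using a by simp
      next
        case False
        then have "u * ?k y2 < u * r2" using a by simp
        moreover have "(1 - u) * ?k y1 \<le> (1 - u) * r1" using a by (intro mult_left_mono) auto
        ultimately show ?thesis by linarith
      qed
      finally show "?k ((1 - u) *\<^sub>R y1 + u *\<^sub>R y2) < (1 - u) * r1 + u * r2" .
    qed
  qed
  have "(v, ?k v + 1) \<in> T" using v unfolding T_def by auto
  then have nT: "T \<noteq> {}" by blast
  have dis: "{(v, ?k v)} \<inter> T = {}" unfolding T_def by auto
  from separating_hyperplane_sets[OF convex_singleton cT _ nT dis]
  obtain ab c where ab0: "ab \<noteq> 0" and s1x: "\<forall>z\<in>{(v, ?k v)}. ab \<bullet> z \<le> c" and s2x: "\<forall>z\<in>T. c \<le> ab \<bullet> z"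
    by blast
  have s1: "ab \<bullet> (v, ?k v) \<le> c" using s1x by blast
  have s2: "\<And>z. z \<in> T \<Longrightarrow> c \<le> ab \<bullet> z" using s2x by blast
  obtain a b where ab: "ab = (a, b)" by (cases ab)
  have s1': "a \<bullet> v + b * ?k v \<le> c" using s1 ab by simp
  have s2': "c \<le> a \<bullet> y + b * r" if "y \<in> interior ?D" "?k y < r" for y r
    using s2[of "(y, r)"] that ab unfolding T_def by simp
  have "b \<ge> 0"
  proof -
    have "c \<le> a \<bullet> v + b * (?k v + 1)" using s2'[OF v] by simp
    then show ?thesis using s1' by (simp add: algebra_simps)
  qed
  moreover have "b \<noteq> 0"
  proof
    assume b0: "b = 0"
    then have a0: "a \<noteq> 0" using ab0 ab by (simp add: zero_prod_def)
    obtain e where e: "e > 0" "ball v e \<subseteq> interior ?D" using v open_interior open_contains_ball by blast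
    define y where "y = v - (e / 2 / norm a) *\<^sub>R a"
    have "norm (y - v) = e / 2" using a0 e unfolding y_def by simp
    then have "y \<in> interior ?D" using e by (auto simp: dist_norm norm_minus_commute)
    then have "c \<le> a \<bullet> y" using s2'[of y "?k y + 1"] b0 by simp
    moreover have "a \<bullet> y = a \<bullet> v - e / 2 * norm a"
      unfolding y_def using a0 by (simp add: inner_diff_right power2_norm_eq_inner[symmetric] power2_eq_square)
    moreover have "e * norm a > 0" using e a0 by simp
    ultimately show False using s1' b0 by simp
  qed
  ultimately have bp: "b > 0" by simp
  define g where "g = (- 1 / b) *\<^sub>R a"
  have mI: "(?k v - g \<bullet> v) + g \<bullet> y \<le> ?k y" if y: "y \<in> interior ?D" for y
  proof -
    have "a \<bullet> v + b * ?k v \<le> a \<bullet> y + b * ?k y + eps" if "eps > 0" for eps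
    proof -
      have "c \<le> a \<bullet> y + b * (?k y + eps / b)" using s2'[OF y, of "?k y + eps / b"] that bp by simp
      then show ?thesis using s1' bp by (simp add: algebra_simps)
    qed
    then have "a \<bullet> v + b * ?k v \<le> a \<bullet> y + b * ?k y" by (rule field_le_epsilon)
    then have "(a \<bullet> v + b * ?k v) / b \<le> (a \<bullet> y + b * ?k y) / b" using bp by (intro divide_right_mono) auto
    then show ?thesis using bp unfolding g_def by (simp add: add_divide_distrib inner_diff_right algebra_simps)
  qed
  have "g \<in> subdiff f v"
  proof (rule subdiff_from_real[OF pf])
    show "v \<in> ?D" using v interior_subset by blast
    fix z assume z: "z \<in> ?D"
    have "(?k v - g \<bullet> v) + g \<bullet> z \<le> ?k z" by (rule ext_minorant[OF ck v z mI])
    then show "?k v + g \<bullet> (z - v) \<le> ?k z" by (simp add: inner_diff_right)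
  qed
  then show ?thesis by blast
qed


lemma interior_of_subgrad:
  fixes f :: "'a::euclidean_space \<Rightarrow> ereal"
  assumes pf: "proper_fun f" and cf: "econvex f" and ne: "interior (edom f) \<noteq> {}"
    and u: "u \<in> subdiff f v" and uq: "\<And>u'. u' \<in> subdiff f v \<Longrightarrow> u' = u"
  shows "v \<in> interior (edom f)"
proof (rule ccontr)
  assume nv: "v \<notin> interior (edom f)"
  let ?D = "edom f" and ?k = "\<lambda>y. real_of_ereal (f y)"
  have cD: "convex ?D" by (rule econvex_dom[OF pf cf])
  have vD: "v \<in> ?D" using u unfolding subdiff_def by auto
  have dis: "{v} \<inter> interior ?D = {}" using nv by auto
  from separating_hyperplane_sets[OF convex_singleton convex_interior[OF cD] _ ne dis]
  obtain a c where a0: "a \<noteq> 0" and s1x: "\<forall>z\<in>{v}. a \<bullet> z \<le> c" and s2x: "\<forall>z\<in>interior ?D. c \<le> a \<bullet> z"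
    by blast
  have s1: "a \<bullet> v \<le> c" using s1x by simp
  obtain w0 where w0: "w0 \<in> interior ?D" using ne by blast
  have s2: "c \<le> a \<bullet> z" if z: "z \<in> ?D" for z
  proof -
    have cc: "convex_on ?D (\<lambda>_. 0::real)" using convex_on_const cD by blast
    have "c + (- a) \<bullet> z \<le> (\<lambda>_. 0::real) z"
      by (rule ext_minorant[OF cc w0 z]) (use s2x in auto)
    then show ?thesis by simp
  qed
  have "u - a \<in> subdiff f v"
  proof (rule subdiff_from_real[OF pf vD])
    fix z assume z: "z \<in> ?D"
    have "?k v + u \<bullet> (z - v) \<le> ?k z" by (rule subdiff_real[OF pf u z])
    moreover have "a \<bullet> (z - v) \<ge> 0" using s1 s2[OF z] by (simp add: inner_diff_right)
    ultimately show "?k v + (u - a) \<bullet> (z - v) \<le> ?k z" by (simp add: inner_diff_left)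
  qed
  then have "u - a = u" by (rule uq)
  then show False using a0 by simp
qed

lemma egrad_eq:
  assumes "((\<lambda>y. real_of_ereal (f y)) has_derivative (\<lambda>h. u \<bullet> h)) (at v)"
  shows "egrad f v = u"
proof -
  let ?P = "\<lambda>g. ((\<lambda>y. real_of_ereal (f y)) has_derivative (\<lambda>h. g \<bullet> h)) (at v)"
  have "?P (egrad f v)" unfolding egrad_def by (rule someI[of ?P u]) (rule assms)
  then have "(\<lambda>h. egrad f v \<bullet> h) = (\<lambda>h. u \<bullet> h)" using assms by (rule has_derivative_unique)
  then have "egrad f v \<bullet> (egrad f v - u) = u \<bullet> (egrad f v - u)" by metis
  then have "(egrad f v - u) \<bullet> (egrad f v - u) = 0" by (simp add: inner_diff_left)
  then show ?thesis by simp
qed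


lemma diff_unique_subgrad:
  fixes f :: "'a::euclidean_space \<Rightarrow> ereal"
  assumes pf: "proper_fun f" and cf: "econvex f" and v: "v \<in> interior (edom f)"
    and u: "u \<in> subdiff f v"
    and uq: "\<And>w u1 u2. w \<in> interior (edom f) \<Longrightarrow> u1 \<in> subdiff f w \<Longrightarrow> u2 \<in> subdiff f w \<Longrightarrow> u1 = u2"
  shows "((\<lambda>y. real_of_ereal (f y)) has_derivative (\<lambda>h. u \<bullet> h)) (at v)"
proof -
  let ?D = "edom f" and ?I = "interior (edom f)" and ?k = "\<lambda>y. real_of_ereal (f y)"
  have cD: "convex ?D" by (rule econvex_dom[OF pf cf])
  have ck: "convex_on ?D ?k" by (rule econvex_convex_on[OF pf cf])
  have ckI: "convex_on ?I ?k" using convex_on_subset[OF ck interior_subset] convex_interior[OF cD] by blast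
  have kc: "continuous_on ?I ?k" by (rule convex_on_continuous[OF open_interior ckI])
  have isc: "isCont ?k v" using kc v continuous_on_eq_continuous_at[OF open_interior] by blast
  have vD: "v \<in> ?D" using v interior_subset by blast
  define sg where "sg y = (SOME p. p \<in> subdiff f y)" for y
  have sgI: "sg y \<in> subdiff f y" if "y \<in> ?I" for y
    unfolding sg_def using subgrad_interior[OF pf cf that] by (rule someI_ex)
  obtain e0 where e0: "e0 > 0" "cball v e0 \<subseteq> ?I" using v open_interior open_contains_cball by blast
  define r where "r = e0 / 2"
  have rp: "r > 0" using e0 r_def by simp
  have "2 * r = e0" unfolding r_def by simp
  then have cb: "cball v (2 * r) \<subseteq> ?I" using e0 by simp
  have "compact (?k ` cball v (2 * r))"
    by (rule compact_continuous_image[OF continuous_on_subset[OF kc cb] compact_cball])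
  then have "bounded (?k ` cball v (2 * r))" by (rule compact_imp_bounded)
  then obtain M where M0': "\<forall>x\<in>?k ` cball v (2 * r). norm x \<le> M" unfolding bounded_iff by blast
  have M: "\<bar>?k z\<bar> \<le> M" if "z \<in> cball v (2 * r)" for z using M0' that by auto
  have "v \<in> cball v (2 * r)" using rp by simp
  then have M0: "M \<ge> 0" using M[of v] abs_ge_zero[of "?k v"] by linarith
  have bI: "y \<in> ?I" if "y \<in> ball v r" for y
  proof -
    have "y \<in> cball v (2 * r)" using that rp by simp
    then show ?thesis using cb by blast
  qed
  have bnd: "norm p \<le> 2 * M / r" if y: "y \<in> ball v r" and p: "p \<in> subdiff f y" for y p
  proof (cases "p = 0")
    case True then show ?thesis using M0 rp by simp
  next
    case False
    define z where "z = y + (r / norm p) *\<^sub>R p"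
    have "dist v z \<le> dist v y + dist y z" by (rule dist_triangle)
    also have "dist y z = r" using False rp unfolding z_def by (simp add: dist_norm)
    finally have "dist v z \<le> 2 * r" using y by simp
    then have zc: "z \<in> cball v (2 * r)" by simp
    have yc: "y \<in> cball v (2 * r)" using y rp by simp
    have "?k y + p \<bullet> (z - y) \<le> ?k z"
      by (rule subdiff_real[OF pf p]) (use zc cb interior_subset in blast)
    moreover have "p \<bullet> (z - y) = r * norm p" using False
      unfolding z_def by (simp add: power2_norm_eq_inner[symmetric] power2_eq_square)
    ultimately have "r * norm p \<le> 2 * M" using M[OF zc] M[OF yc] by linarith
    then show ?thesis using rp by (simp add: field_simps)
  qed
  have cont: "\<exists>d>0. \<forall>y. norm (y - v) < d \<longrightarrow> norm (sg y - u) \<le> e" if ep: "e > 0" for e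
  proof (rule ccontr)
    assume "\<not> ?thesis"
    then have neg: "\<forall>d>0. \<exists>y. norm (y - v) < d \<and> e < norm (sg y - u)" by (auto simp: not_le)
    have "\<forall>n. \<exists>y. norm (y - v) < min r (inverse (real (Suc n))) \<and> e < norm (sg y - u)"
    proof
      fix n :: nat
      have "min r (inverse (real (Suc n))) > 0" using rp by simp
      then show "\<exists>y. norm (y - v) < min r (inverse (real (Suc n))) \<and> e < norm (sg y - u)"
        using neg by blast
    qed
    from choice[OF this] obtain Y where YY: "\<forall>n. norm (Y n - v) < min r (inverse (real (Suc n))) \<and> e < norm (sg (Y n) - u)"
      by blast
    have Y: "\<And>n. norm (Y n - v) < min r (inverse (real (Suc n)))" and Ye: "\<And>n. norm (sg (Y n) - u) > e"
      using YY by auto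
    have Yb: "Y n \<in> ball v r" for n using Y[of n] by (simp add: dist_norm norm_minus_commute)
    have YI: "Y n \<in> ?I" for n using bI[OF Yb[of n]] .
    have "(\<lambda>n. Y n - v) \<longlonglongrightarrow> 0"
    proof (rule Lim_null_comparison)
      show "\<forall>\<^sub>F n in sequentially. norm (Y n - v) \<le> inverse (real (Suc n))"
        using Y by (simp add: less_imp_le)
      show "(\<lambda>n. inverse (real (Suc n))) \<longlonglongrightarrow> 0" by (rule LIMSEQ_inverse_real_of_nat)
    qed
    then have "(\<lambda>n. (Y n - v) + v) \<longlonglongrightarrow> 0 + v" by (intro tendsto_add tendsto_const)
    then have Yl: "Y \<longlonglongrightarrow> v" by simp
    define G where "G n = sg (Y n)" for n
    have Gs: "G n \<in> subdiff f (Y n)" for n unfolding G_def by (rule sgI[OF YI])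
    have "G n \<in> cball 0 (2 * M / r)" for n using bnd[OF Yb Gs] by simp
    then have "\<forall>n. G n \<in> cball 0 (2 * M / r)" by blast
    from seq_compactE[OF compact_imp_seq_compact[OF compact_cball] this]
    obtain l \<phi> where \<phi>: "strict_mono \<phi>" and Gl: "(G \<circ> \<phi>) \<longlonglongrightarrow> l" by blast
    have Yl': "(Y \<circ> \<phi>) \<longlonglongrightarrow> v" by (rule LIMSEQ_subseq_LIMSEQ[OF Yl \<phi>])
    have "l \<in> subdiff f v"
    proof (rule subdiff_from_real[OF pf vD])
      fix z assume z: "z \<in> ?D"
      have "(\<lambda>n. ?k ((Y \<circ> \<phi>) n) + (G \<circ> \<phi>) n \<bullet> (z - (Y \<circ> \<phi>) n)) \<longlonglongrightarrow> ?k v + l \<bullet> (z - v)"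
        by (intro tendsto_add tendsto_inner tendsto_diff tendsto_const isCont_tendsto_compose[OF isc] Yl' Gl)
      moreover have "\<forall>n. ?k ((Y \<circ> \<phi>) n) + (G \<circ> \<phi>) n \<bullet> (z - (Y \<circ> \<phi>) n) \<le> ?k z"
        using subdiff_real[OF pf Gs z] by simp
      ultimately show "?k v + l \<bullet> (z - v) \<le> ?k z" by (intro LIMSEQ_le_const2) auto
    qed
    then have lu: "l = u" by (rule uq[OF v _ u])
    have "(\<lambda>n. norm ((G \<circ> \<phi>) n - u)) \<longlonglongrightarrow> norm (l - u)"
      by (intro tendsto_norm tendsto_diff Gl tendsto_const)
    moreover have "\<forall>n. e \<le> norm ((G \<circ> \<phi>) n - u)" using Ye unfolding G_def by (simp add: less_imp_le)
    ultimately have "e \<le> norm (l - u)" by (intro LIMSEQ_le_const) auto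
    then show False using lu ep by simp
  qed
  show ?thesis
    unfolding has_derivative_at_alt
  proof (intro conjI allI impI)
    show "bounded_linear (\<lambda>h. u \<bullet> h)" by (rule bounded_linear_inner_right)
    fix e :: real assume ep: "e > 0"
    obtain d where dp: "d > 0" and d: "\<And>y. norm (y - v) < d \<Longrightarrow> norm (sg y - u) \<le> e"
      using cont[OF ep] by blast
    show "\<exists>d>0. \<forall>y. norm (y - v) < d \<longrightarrow> norm (?k y - ?k v - u \<bullet> (y - v)) \<le> e * norm (y - v)"
    proof (intro exI[of _ "min d r"] conjI allI impI)
      show "min d r > 0" using dp rp by simp
      fix y assume y: "norm (y - v) < min d r"
      have yb: "y \<in> ball v r" using y by (simp add: dist_norm norm_minus_commute)
      then have yI: "y \<in> ?I" by (rule bI)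
      have yD: "y \<in> ?D" using yI interior_subset by blast
      have lo: "?k v + u \<bullet> (y - v) \<le> ?k y" by (rule subdiff_real[OF pf u yD])
      have up: "?k y + sg y \<bullet> (v - y) \<le> ?k v" by (rule subdiff_real[OF pf sgI[OF yI] vD])
      have "(sg y - u) \<bullet> (y - v) \<le> norm (sg y - u) * norm (y - v)" by (rule norm_cauchy_schwarz)
      also have "\<dots> \<le> e * norm (y - v)" using d y by (intro mult_right_mono) auto
      finally have "(sg y - u) \<bullet> (y - v) \<le> e * norm (y - v)" .
      moreover have "sg y \<bullet> (v - y) = - (sg y \<bullet> (y - v))" by (simp add: inner_diff_right)
      ultimately show "norm (?k y - ?k v - u \<bullet> (y - v)) \<le> e * norm (y - v)"
        using lo up by (simp add: inner_diff_left)
    qed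
  qed
qed


lemma lsc_nhds:
  assumes "lsc f" "c < f v" shows "\<forall>\<^sub>F y in nhds v. c < f y"
  using assms unfolding lsc_def eventually_nhds_conv_at by blast

lemma lscn_sum:
  fixes f g :: "'a::topological_space \<Rightarrow> ereal"
  assumes lf: "\<And>c. c < f v \<Longrightarrow> \<forall>\<^sub>F y in nhds v. c < f y"
    and lg: "\<And>c. c < g v \<Longrightarrow> \<forall>\<^sub>F y in nhds v. c < g y"
    and nf: "\<And>y. f y \<noteq> -\<infinity>" and ng: "\<And>y. g y \<noteq> -\<infinity>"
    and c: "c < f v + g v"
  shows "\<forall>\<^sub>F y in nhds v. c < f y + g y"
proof (cases c)
  case MInf
  have "c < f y + g y" for y using nf[of y] ng[of y] MInf by (cases "f y"; cases "g y") auto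
  then show ?thesis by (intro always_eventually allI)
next
  case PInf then show ?thesis using c by simp
next
  case (real cr)
  have ex: "\<exists>c1 c2. ereal c1 < f v \<and> ereal c2 < g v \<and> cr = c1 + c2"
  proof (cases "f v")
    case (real a)
    show ?thesis
    proof (cases "g v")
      case (real b)
      have "cr < a + b" using c \<open>f v = ereal a\<close> real \<open>c = ereal cr\<close> by simp
      then show ?thesis using \<open>f v = ereal a\<close> real
        by (intro exI[of _ "a - (a + b - cr) / 2"] exI[of _ "b - (a + b - cr) / 2"]) auto
    next
      case PInf
      then show ?thesis using \<open>f v = ereal a\<close>
        by (intro exI[of _ "a - 1"] exI[of _ "cr - (a - 1)"]) auto
    qed (use ng in auto)
  next
    case PInf
    have "\<exists>c2. ereal c2 < g v"
    proof (cases "g v")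
      case (real r) then show ?thesis by (intro exI[of _ "r - 1"]) simp
    next
      case PInf then show ?thesis by (intro exI[of _ 0]) simp
    qed (use ng in auto)
    then obtain c2 where "ereal c2 < g v" by blast
    then show ?thesis using PInf by (intro exI[of _ "cr - c2"] exI[of _ c2]) auto
  qed (use nf in auto)
  then obtain c1 c2 where c1: "ereal c1 < f v" and c2: "ereal c2 < g v" and cc: "cr = c1 + c2" by blast
  have "\<forall>\<^sub>F y in nhds v. ereal c1 < f y \<and> ereal c2 < g y"
    using lf[OF c1] lg[OF c2] by (rule eventually_conj)
  then show ?thesis
  proof (rule eventually_mono)
    fix y assume "ereal c1 < f y \<and> ereal c2 < g y"
    then have "ereal c1 + ereal c2 < f y + g y" by (intro ereal_add_strict_mono2) auto
    then show "c < f y + g y" using real cc by simp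
  qed
qed

lemma lscn_affine:
  fixes f :: "'a::euclidean_space \<Rightarrow> ereal"
  assumes "lsc f" "c < f (x - t *\<^sub>R v)"
  shows "\<forall>\<^sub>F y in nhds v. c < f (x - t *\<^sub>R y)"
proof -
  have "\<forall>\<^sub>F z in nhds (x - t *\<^sub>R v). c < f z" by (rule lsc_nhds[OF assms])
  moreover have "filterlim (\<lambda>y. x - t *\<^sub>R y) (nhds (x - t *\<^sub>R v)) (nhds v)"
    by (intro tendsto_intros filterlim_ident)
  ultimately show ?thesis by (rule eventually_compose_filterlim)
qed

lemma lscn_scale:
  fixes K :: "'a::euclidean_space \<Rightarrow> ereal"
  assumes t: "t > 0" and lK: "lsc K" and nK: "\<And>y. K y \<noteq> -\<infinity>" and c: "c < ereal t * K v"
  shows "\<forall>\<^sub>F y in nhds v. c < ereal t * K y"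
proof (cases c)
  case MInf
  have "c < ereal t * K y" for y using nK[of y] t MInf by (cases "K y") auto
  then show ?thesis by (intro always_eventually allI)
next
  case PInf then show ?thesis using c by simp
next
  case (real cr)
  have "ereal (cr / t) < K v"
  proof (cases "K v")
    case (real k)
    then have "cr < t * k" using c \<open>c = ereal cr\<close> by simp
    then show ?thesis using real t by (simp add: field_simps)
  qed (use nK in auto)
  then have "\<forall>\<^sub>F y in nhds v. ereal (cr / t) < K y" by (rule lsc_nhds[OF lK])
  then show ?thesis
  proof (rule eventually_mono)
    fix y assume a: "ereal (cr / t) < K y"
    show "c < ereal t * K y"
    proof (cases "K y")
      case (real k)
      then have "cr / t < k" using a by simp
      then have "cr < t * k" using t by (simp add: field_simps)
      then show ?thesis using real \<open>c = ereal cr\<close> by simp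
    next
      case PInf then show ?thesis using t \<open>c = ereal cr\<close> by simp
    qed (use nK in auto)
  qed
qed

lemma lim0:
  fixes c p \<beta> :: real
  assumes "\<And>s. s > 0 \<Longrightarrow> c \<le> p + \<beta> * s"
  shows "\<beta> \<ge> 0" and "c \<le> p"
proof -
  show b: "\<beta> \<ge> 0"
  proof (rule ccontr)
    assume "\<not> \<beta> \<ge> 0"
    then have bn: "\<beta> < 0" by simp
    define s where "s = (\<bar>c - p\<bar> + 1) / (- \<beta>)"
    have sp: "s > 0" using bn unfolding s_def by (intro divide_pos_pos) auto
    have "\<beta> * s = - (\<bar>c - p\<bar> + 1)" using bn unfolding s_def by simp
    then show False using assms[OF sp] by linarith
  qed
  show "c \<le> p"
  proof (rule field_le_epsilon)
    fix e :: real assume e: "e > 0"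
    show "c \<le> p + e"
    proof (cases "\<beta> = 0")
      case True then show ?thesis using assms[of 1] e by simp
    next
      case False
      then have bp: "\<beta> > 0" using b by simp
      have "c \<le> p + \<beta> * (e / \<beta>)" using assms[of "e / \<beta>"] e bp by simp
      then show ?thesis using bp by simp
    qed
  qed
qed


definition F2f :: "('a::euclidean_space \<Rightarrow> ereal) \<Rightarrow> ('a \<Rightarrow> ereal) \<Rightarrow> real \<Rightarrow> 'a \<Rightarrow> 'a \<Rightarrow> ereal" where
  "F2f J H t x v = J (x - t *\<^sub>R v) + ereal t * fconj H v"

context
  fixes J H :: "'a::euclidean_space \<Rightarrow> ereal" and t :: real and x :: 'a
  assumes JG: "J \<in> Gamma0" and Jcoer: "one_coercive J"
    and HG: "H \<in> Gamma0" and Hleg: "legendre H"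
    and t: "t > 0"
    and x1: "x \<in> {a + t *\<^sub>R b | a b. a \<in> edom J \<and> b \<in> interior (edom (fconj H))}"
begin

lemma J_proper: "proper_fun J" using JG unfolding Gamma0_def by auto
lemma J_nm: "J y \<noteq> -\<infinity>" using J_proper unfolding proper_fun_def by auto
lemma Kp: "proper_fun (fconj H)" by (rule K_proper[OF HG Hleg])
lemma K_nm: "fconj H y \<noteq> -\<infinity>" by (rule K_not_minf[OF HG Hleg])

lemma tK_nm: "ereal t * fconj H y \<noteq> -\<infinity>"
  using K_nm[of y] t by (cases "fconj H y") auto

lemma F2_nm: "F2f J H t x v \<noteq> -\<infinity>"
  unfolding F2f_def using J_nm[of "x - t *\<^sub>R v"] tK_nm[of v]
  by (cases "J (x - t *\<^sub>R v)"; cases "ereal t * fconj H v") auto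

lemma x1': obtains v0 where "v0 \<in> interior (edom (fconj H))" "x - t *\<^sub>R v0 \<in> edom J"
  using x1 by auto

lemma F2_fin_parts:
  assumes "F2f J H t x v < \<infinity>"
  shows "x - t *\<^sub>R v \<in> edom J" "v \<in> edom (fconj H)"
proof -
  have a: "J (x - t *\<^sub>R v) + ereal t * fconj H v < \<infinity>" using assms unfolding F2f_def .
  show "x - t *\<^sub>R v \<in> edom J" using a tK_nm[of v] unfolding edom_def
    by (cases "J (x - t *\<^sub>R v)"; cases "ereal t * fconj H v") auto
  have "ereal t * fconj H v < \<infinity>" using a J_nm[of "x - t *\<^sub>R v"]
    by (cases "J (x - t *\<^sub>R v)"; cases "ereal t * fconj H v") auto
  then show "v \<in> edom (fconj H)" using t unfolding edom_def by (cases "fconj H v") auto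
qed

lemma F2_lscn:
  assumes "c < F2f J H t x v" shows "\<forall>\<^sub>F y in nhds v. c < F2f J H t x y"
proof -
  have lJ: "lsc J" using JG unfolding Gamma0_def by auto
  have lK: "lsc (fconj H)" using K_Gamma0[OF HG Hleg] unfolding Gamma0_def by auto
  show ?thesis using assms unfolding F2f_def
    by (intro lscn_sum[where f="\<lambda>y. J (x - t *\<^sub>R y)" and g="\<lambda>y. ereal t * fconj H y"]
        lscn_affine[OF lJ] lscn_scale[OF t lK K_nm] J_nm tK_nm)
qed

lemma F2_coercive:
  fixes C :: real
  shows "\<exists>R. \<forall>v. F2f J H t x v \<le> ereal C \<longrightarrow> norm v \<le> R"
proof -
  obtain u0 where u0: "H u0 < \<infinity>" using H_proper[OF HG Hleg] unfolding proper_fun_def edom_def by auto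
  then obtain h0 where h0: "H u0 = ereal h0" using H_proper[OF HG Hleg] unfolding proper_fun_def by (cases "H u0") auto
  have Kb: "ereal (v \<bullet> u0 - h0) \<le> fconj H v" for v
    using FY[OF HG Hleg, of u0 v] h0 by (simp add: inner_commute)
  define L where "L = norm u0 + 1"
  have "\<forall>\<^sub>F y in at_infinity. ereal L < J y / ereal (norm y)"
    using Jcoer unfolding one_coercive_def tendsto_PInfty by blast
  then obtain R0 where R0: "\<And>y. R0 \<le> norm y \<Longrightarrow> ereal L < J y / ereal (norm y)"
    unfolding eventually_at_infinity by blast
  define R where "R = max R0 1"
  have Jb: "ereal (L * norm y) \<le> J y" if y: "R \<le> norm y" for y
  proof -
    have "norm y \<ge> 1" using y R_def by simp
    then have ny: "norm y > 0" by linarith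
    have l: "ereal L < J y / ereal (norm y)" using R0 y R_def by simp
    show ?thesis
    proof (cases "J y")
      case (real j)
      then have "L < j / norm y" using l ny by simp
      then show ?thesis using real ny by (simp add: field_simps)
    qed (use J_nm in auto)
  qed
  define R' where "R' = max ((norm x + R) / t) ((C + L * norm x + t * \<bar>h0\<bar>) / t)"
  show ?thesis
  proof (intro exI[of _ R'] allI impI)
    fix v assume Fv: "F2f J H t x v \<le> ereal C"
    let ?y = "x - t *\<^sub>R v"
    have nyv: "t * norm v \<le> norm ?y + norm x"
    proof -
      have "t *\<^sub>R v = x - ?y" by simp
      then have "norm (t *\<^sub>R v) \<le> norm x + norm ?y" using norm_triangle_ineq4[of x ?y] by simp
      then show ?thesis using t by simp
    qed
    show "norm v \<le> R'"
    proof (cases "norm ?y < R")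
      case True
      then have "t * norm v \<le> norm x + R" using nyv by simp
      then have "norm v \<le> (norm x + R) / t" using t by (simp add: field_simps)
      then show ?thesis unfolding R'_def by simp
    next
      case False
      then have Jy: "ereal (L * norm ?y) \<le> J ?y" using Jb by simp
      have "ereal t * ereal (v \<bullet> u0 - h0) \<le> ereal t * fconj H v"
        using Kb[of v] t by (intro ereal_mult_left_mono) auto
      then have "ereal (L * norm ?y) + ereal (t * (v \<bullet> u0 - h0)) \<le> F2f J H t x v"
        unfolding F2f_def using Jy by (intro add_mono) auto
      from order_trans[OF this Fv] have ineq: "L * norm ?y + t * (v \<bullet> u0 - h0) \<le> C" by simp
      have "- (norm v * norm u0) \<le> v \<bullet> u0"
        using norm_cauchy_schwarz[of "- v" u0] by simp
      then have "t * (- (norm v * norm u0) - \<bar>h0\<bar>) \<le> t * (v \<bullet> u0 - h0)"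
        using t by (intro mult_left_mono) auto
      moreover have "L * (t * norm v - norm x) \<le> L * norm ?y"
        using nyv unfolding L_def by (intro mult_left_mono) auto
      ultimately have "L * (t * norm v - norm x) + t * (- (norm v * norm u0) - \<bar>h0\<bar>) \<le> C"
        using ineq by linarith
      then have "t * norm v \<le> C + L * norm x + t * \<bar>h0\<bar>" unfolding L_def
        by (simp add: algebra_simps)
      then have "norm v \<le> (C + L * norm x + t * \<bar>h0\<bar>) / t" using t by (simp add: field_simps)
      then show ?thesis unfolding R'_def by simp
    qed
  qed
qed


lemma F2_min_exists: "\<exists>v. \<forall>w. F2f J H t x v \<le> F2f J H t x w"
proof -
  let ?F = "F2f J H t x"
  obtain v0 where v0: "v0 \<in> interior (edom (fconj H))" "x - t *\<^sub>R v0 \<in> edom J" using x1' by blast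
  have "v0 \<in> edom (fconj H)" using v0 interior_subset by blast
  then have "?F v0 < \<infinity>" using v0 t unfolding F2f_def edom_def
    by (cases "J (x - t *\<^sub>R v0)"; cases "fconj H v0") auto
  then obtain C0 where C0: "?F v0 = ereal C0" using F2_nm[of v0] by (cases "?F v0") auto
  obtain R where R: "\<And>v. ?F v \<le> ereal (C0 + 1) \<Longrightarrow> norm v \<le> R" using F2_coercive[of "C0 + 1"] by blast
  define m where "m = Inf (range ?F)"
  obtain f :: "nat \<Rightarrow> ereal" where fd: "decseq f" and fr: "range f \<subseteq> range ?F" and fm: "m = (INF i. f i)"
    using Inf_countable_INF[of "range ?F"] unfolding m_def by blast
  have "\<forall>i. \<exists>v. f i = ?F v" using fr by blast
  from choice[OF this] obtain V where V': "\<forall>i. f i = ?F (V i)" by blast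
  have V: "\<And>i. f i = ?F (V i)" using V' by blast
  have fl: "f \<longlonglongrightarrow> m" unfolding fm by (rule LIMSEQ_INF[OF fd])
  have mle: "m \<le> ?F w" for w unfolding m_def by (rule INF_lower) simp
  have "ereal C0 < ereal (C0 + 1)" by simp
  then have "m < ereal (C0 + 1)" using mle[of v0] C0 by (metis le_less_trans)
  then have "\<forall>\<^sub>F i in sequentially. f i < ereal (C0 + 1)" using fl by (rule order_tendstoD(2)[rotated])
  then obtain N where N: "\<And>i. i \<ge> N \<Longrightarrow> f i < ereal (C0 + 1)" unfolding eventually_sequentially by blast
  define W where "W n = V (n + N)" for n
  have Wb: "W n \<in> cball 0 R" for n
    using R[of "W n"] N[of "n + N"] V[of "n + N"] unfolding W_def by simp
  have Wl: "(\<lambda>n. ?F (W n)) \<longlonglongrightarrow> m"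
    using LIMSEQ_ignore_initial_segment[OF fl, of N] V unfolding W_def by simp
  have sc: "seq_compact (cball (0::'a) R)" by (rule compact_imp_seq_compact[OF compact_cball])
  have Wb': "\<forall>n. W n \<in> cball 0 R" using Wb by blast
  obtain vb \<phi> where "vb \<in> cball 0 R" and \<phi>: "strict_mono \<phi>" and Wc: "(W \<circ> \<phi>) \<longlonglongrightarrow> vb"
    by (rule seq_compactE[OF sc Wb'])
  have Wl': "(\<lambda>n. ?F (W (\<phi> n))) \<longlonglongrightarrow> m"
    using LIMSEQ_subseq_LIMSEQ[OF Wl \<phi>] by (simp add: o_def)
  have "?F vb \<le> m"
  proof (rule ccontr)
    assume "\<not> ?F vb \<le> m"
    then obtain c where c1: "m < ereal c" and c2: "ereal c < ?F vb" by (meson ereal_dense2 not_le)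
    have "\<forall>\<^sub>F y in nhds vb. ereal c < ?F y" by (rule F2_lscn[OF c2])
    then have e1: "\<forall>\<^sub>F n in sequentially. ereal c < ?F ((W \<circ> \<phi>) n)"
      using Wc by (rule eventually_compose_filterlim)
    have e2: "\<forall>\<^sub>F n in sequentially. ?F (W (\<phi> n)) < ereal c"
      using Wl' c1 by (rule order_tendstoD(2))
    have "\<forall>\<^sub>F n in sequentially. False"
      using eventually_conj[OF e1 e2] by (rule eventually_mono) auto
    then show False by simp
  qed
  then show ?thesis using mle order_trans by blast
qed


lemma F2_real:
  assumes "x - t *\<^sub>R v \<in> edom J" "v \<in> edom (fconj H)"
  shows "F2f J H t x v = ereal (real_of_ereal (J (x - t *\<^sub>R v)) + t * real_of_ereal (fconj H v))"
  unfolding F2f_def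
  using proper_fin[OF J_proper assms(1)] proper_fin[OF Kp assms(2)]
  by (metis plus_ereal.simps(1) times_ereal.simps(1))

lemma F2_min_subgrad:
  assumes vmin: "\<And>w. F2f J H t x vs \<le> F2f J H t x w"
  shows "\<exists>g. g \<in> subdiff (fconj H) vs \<and> g \<in> subdiff J (x - t *\<^sub>R vs)"
proof -
  let ?F = "F2f J H t x" and ?K = "fconj H"
  let ?kK = "\<lambda>v. real_of_ereal (?K v)" and ?kJ = "\<lambda>z. real_of_ereal (J z)"
  let ?DK = "edom ?K" and ?DJ = "edom J"
  obtain v0 where v0: "v0 \<in> interior ?DK" "x - t *\<^sub>R v0 \<in> ?DJ" using x1' by blast
  have v0K: "v0 \<in> ?DK" using v0 interior_subset by blast
  have "?F v0 < \<infinity>" using F2_real[OF v0(2) v0K] by simp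
  then have "?F vs < \<infinity>" using vmin[of v0] by (rule le_less_trans[rotated])
  then have zsJ: "x - t *\<^sub>R vs \<in> ?DJ" and vsK: "vs \<in> ?DK" using F2_fin_parts by auto
  define zs where "zs = x - t *\<^sub>R vs"
  define jz where "jz = ?kJ zs"
  define kv where "kv = ?kK vs"
  have minr: "jz + t * kv \<le> ?kJ (x - t *\<^sub>R v) + t * ?kK v" if "x - t *\<^sub>R v \<in> ?DJ" "v \<in> ?DK" for v
    using vmin[of v] F2_real[OF that] F2_real[OF zsJ vsK] unfolding jz_def kv_def zs_def by simp
  have cDK: "convex ?DK" by (rule econvex_dom[OF Kp K_econvex[OF HG Hleg]])
  have ckK: "convex_on ?DK ?kK" by (rule econvex_convex_on[OF Kp K_econvex[OF HG Hleg]])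
  have ckI: "convex_on (interior ?DK) ?kK" using convex_on_subset[OF ckK interior_subset] convex_interior[OF cDK] by blast
  have JE: "econvex J" using JG unfolding Gamma0_def by auto
  have cDJ: "convex ?DJ" by (rule econvex_dom[OF J_proper JE])
  have ckJ: "convex_on ?DJ ?kJ" by (rule econvex_convex_on[OF J_proper JE])
  define A where "A = {z. fst z \<in> interior ?DK \<and> t * (?kK (fst z) - kv) < snd z}"
  define B where "B = {z. x - t *\<^sub>R fst z \<in> ?DJ \<and> snd z \<le> jz - ?kJ (x - t *\<^sub>R fst z)}"
  have cA: "convex A"
    unfolding convex_alt A_def
  proof (intro ballI allI impI, clarsimp)
    fix y1 r1 y2 r2 and u :: real
    assume a: "y1 \<in> interior ?DK" "t * (?kK y1 - kv) < r1" "y2 \<in> interior ?DK" "t * (?kK y2 - kv) < r2" "0 \<le> u" "u \<le> 1"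
    show "(1 - u) *\<^sub>R y1 + u *\<^sub>R y2 \<in> interior ?DK \<and>
          t * (?kK ((1 - u) *\<^sub>R y1 + u *\<^sub>R y2) - kv) < (1 - u) * r1 + u * r2"
    proof
      show "(1 - u) *\<^sub>R y1 + u *\<^sub>R y2 \<in> interior ?DK"
        using convex_interior[OF cDK] a unfolding convex_alt by blast
      have "?kK ((1 - u) *\<^sub>R y1 + u *\<^sub>R y2) \<le> (1 - u) * ?kK y1 + u * ?kK y2"
        using convex_onD[OF ckI] a by blast
      then have "t * ?kK ((1 - u) *\<^sub>R y1 + u *\<^sub>R y2) \<le> t * ((1 - u) * ?kK y1 + u * ?kK y2)"
        using t by (intro mult_left_mono) auto
      then have "t * (?kK ((1 - u) *\<^sub>R y1 + u *\<^sub>R y2) - kv) \<le> (1 - u) * (t * (?kK y1 - kv)) + u * (t * (?kK y2 - kv))"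
        by (simp add: algebra_simps)
      also have "\<dots> < (1 - u) * r1 + u * r2"
      proof (cases "u = 0")
        case True then show ?thesis using a by simp
      next
        case False
        then have "u * (t * (?kK y2 - kv)) < u * r2" using a by simp
        moreover have "(1 - u) * (t * (?kK y1 - kv)) \<le> (1 - u) * r1" using a by (intro mult_left_mono) auto
        ultimately show ?thesis by linarith
      qed
      finally show "t * (?kK ((1 - u) *\<^sub>R y1 + u *\<^sub>R y2) - kv) < (1 - u) * r1 + u * r2" .
    qed
  qed
  have cB: "convex B"
    unfolding convex_alt B_def
  proof (intro ballI allI impI, clarsimp)
    fix y1 r1 y2 r2 and u :: real
    assume a: "x - t *\<^sub>R y1 \<in> ?DJ" "r1 \<le> jz - ?kJ (x - t *\<^sub>R y1)"
      "x - t *\<^sub>R y2 \<in> ?DJ" "r2 \<le> jz - ?kJ (x - t *\<^sub>R y2)" "0 \<le> u" "u \<le> 1"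
    have eq: "x - t *\<^sub>R ((1 - u) *\<^sub>R y1 + u *\<^sub>R y2) = (1 - u) *\<^sub>R (x - t *\<^sub>R y1) + u *\<^sub>R (x - t *\<^sub>R y2)"
      by (simp add: algebra_simps)
    have m: "(1 - u) *\<^sub>R (x - t *\<^sub>R y1) + u *\<^sub>R (x - t *\<^sub>R y2) \<in> ?DJ"
      using cDJ a unfolding convex_alt by blast
    have "?kJ ((1 - u) *\<^sub>R (x - t *\<^sub>R y1) + u *\<^sub>R (x - t *\<^sub>R y2)) \<le> (1 - u) * ?kJ (x - t *\<^sub>R y1) + u * ?kJ (x - t *\<^sub>R y2)"
      using convex_onD[OF ckJ] a by blast
    moreover have "(1 - u) * r1 + u * r2 \<le> (1 - u) * (jz - ?kJ (x - t *\<^sub>R y1)) + u * (jz - ?kJ (x - t *\<^sub>R y2))"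
      using a by (intro add_mono mult_left_mono) auto
    ultimately show "x - t *\<^sub>R ((1 - u) *\<^sub>R y1 + u *\<^sub>R y2) \<in> ?DJ \<and>
       (1 - u) * r1 + u * r2 \<le> jz - ?kJ (x - t *\<^sub>R ((1 - u) *\<^sub>R y1 + u *\<^sub>R y2))"
      using m unfolding eq by (simp add: algebra_simps)
  qed
  have nB: "(vs, 0) \<in> B" using zsJ unfolding B_def jz_def zs_def by simp
  have nA: "(v0, t * (?kK v0 - kv) + 1) \<in> A" using v0 unfolding A_def by simp
  have dis: "B \<inter> A = {}"
  proof (rule ccontr)
    assume "B \<inter> A \<noteq> {}"
    then obtain v r where b: "x - t *\<^sub>R v \<in> ?DJ" "r \<le> jz - ?kJ (x - t *\<^sub>R v)"
      and a: "v \<in> interior ?DK" "t * (?kK v - kv) < r" unfolding A_def B_def by auto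
    have "v \<in> ?DK" using a interior_subset by blast
    then show False using minr[OF b(1)] a b by (simp add: algebra_simps)
  qed
  from separating_hyperplane_sets[OF cB cA _ _ dis]
  obtain ab c where ab0: "ab \<noteq> 0" and sBx: "\<forall>z\<in>B. ab \<bullet> z \<le> c" and sAx: "\<forall>z\<in>A. c \<le> ab \<bullet> z"
    using nA nB by blast
  obtain a \<beta> where ab: "ab = (a, \<beta>)" by (cases ab)
  have sB: "a \<bullet> v + \<beta> * r \<le> c" if "x - t *\<^sub>R v \<in> ?DJ" "r \<le> jz - ?kJ (x - t *\<^sub>R v)" for v r
    using sBx that ab unfolding B_def by auto
  have sA0: "c \<le> (a \<bullet> v + \<beta> * (t * (?kK v - kv))) + \<beta> * s" if "v \<in> interior ?DK" "s > 0" for v s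
  proof -
    have "(v, t * (?kK v - kv) + s) \<in> A" using that unfolding A_def by simp
    then have "c \<le> ab \<bullet> (v, t * (?kK v - kv) + s)" using sAx by blast
    then show ?thesis using ab by (simp add: algebra_simps)
  qed
  have sA: "c \<le> a \<bullet> v + \<beta> * (t * (?kK v - kv))" if "v \<in> interior ?DK" for v
    using lim0(2)[OF sA0[OF that]] .
  have bge: "\<beta> \<ge> 0" using lim0(1)[OF sA0[OF v0(1)]] .
  have avs: "a \<bullet> vs \<le> c" using sB[of vs 0] zsJ unfolding jz_def zs_def by simp
  have bne: "\<beta> \<noteq> 0"
  proof
    assume b0: "\<beta> = 0"
    then have a0: "a \<noteq> 0" using ab0 ab by (simp add: zero_prod_def)
    obtain e where e: "e > 0" "ball v0 e \<subseteq> interior ?DK" using v0(1) open_interior open_contains_ball by blast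
    define y where "y = v0 - (e / 2 / norm a) *\<^sub>R a"
    have "norm (y - v0) = e / 2" using a0 e unfolding y_def by simp
    then have "y \<in> interior ?DK" using e by (auto simp: dist_norm norm_minus_commute)
    then have "c \<le> a \<bullet> y" using sA b0 by fastforce
    moreover have "a \<bullet> y = a \<bullet> v0 - e / 2 * norm a"
      unfolding y_def using a0 by (simp add: inner_diff_right power2_norm_eq_inner[symmetric] power2_eq_square)
    moreover have "a \<bullet> v0 \<le> c" using sB[OF v0(2), of "jz - ?kJ (x - t *\<^sub>R v0)"] b0 by simp
    moreover have "e * norm a > 0" using e a0 by simp
    ultimately show False by simp
  qed
  have bp: "\<beta> > 0" using bge bne by simp
  have btp: "\<beta> * t > 0" using bp t by simp
  define g where "g = (- 1 / (\<beta> * t)) *\<^sub>R a"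
  define \<alpha> where "\<alpha> = kv + c / (\<beta> * t)"
  have mI: "\<alpha> + g \<bullet> v \<le> ?kK v" if v: "v \<in> interior ?DK" for v
  proof -
    have "c \<le> a \<bullet> v + \<beta> * (t * (?kK v - kv))" by (rule sA[OF v])
    then have "c / (\<beta> * t) \<le> (a \<bullet> v + \<beta> * (t * (?kK v - kv))) / (\<beta> * t)"
      using btp by (intro divide_right_mono) auto
    also have "\<dots> = a \<bullet> v / (\<beta> * t) + (?kK v - kv)"
    proof -
      have "\<beta> \<noteq> 0" "t \<noteq> 0" using bp t by auto
      then show ?thesis by (simp add: field_simps)
    qed
    finally show ?thesis unfolding \<alpha>_def g_def by (simp add: algebra_simps)
  qed
  have mD: "\<alpha> + g \<bullet> v \<le> ?kK v" if "v \<in> ?DK" for v by (rule ext_minorant[OF ckK v0(1) that mI])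
  have "c \<le> a \<bullet> vs"
  proof -
    have "\<alpha> + g \<bullet> vs \<le> kv" using mD[OF vsK] unfolding kv_def .
    then have "c / (\<beta> * t) \<le> a \<bullet> vs / (\<beta> * t)" unfolding \<alpha>_def g_def by (simp add: algebra_simps)
    then show ?thesis using btp by (simp add: divide_le_cancel)
  qed
  then have cvs: "c = a \<bullet> vs" using avs by simp
  have gK: "g \<in> subdiff ?K vs"
  proof (rule subdiff_from_real[OF Kp vsK])
    fix v assume "v \<in> ?DK"
    from mD[OF this] show "?kK vs + g \<bullet> (v - vs) \<le> ?kK v"
      unfolding \<alpha>_def g_def kv_def cvs by (simp add: algebra_simps inner_diff_right)
  qed
  have gJ: "g \<in> subdiff J zs"
  proof (rule subdiff_from_real[OF J_proper])
    show "zs \<in> ?DJ" using zsJ unfolding zs_def .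
    fix z assume z: "z \<in> ?DJ"
    define v where "v = (1 / t) *\<^sub>R (x - z)"
    have xv: "x - t *\<^sub>R v = z" unfolding v_def using t by simp
    have "a \<bullet> v + \<beta> * (jz - ?kJ z) \<le> c" using sB[of v "jz - ?kJ z"] z xv by simp
    moreover have "a \<bullet> v = a \<bullet> vs + a \<bullet> (zs - z) / t"
    proof -
      have "v = vs + (1 / t) *\<^sub>R (zs - z)" unfolding v_def zs_def using t by (simp add: algebra_simps)
      then show ?thesis by (simp add: inner_add_right)
    qed
    ultimately have "a \<bullet> (zs - z) / t \<le> \<beta> * (?kJ z - jz)" using cvs by (simp add: algebra_simps)
    then have "a \<bullet> (zs - z) / t / \<beta> \<le> \<beta> * (?kJ z - jz) / \<beta>"
      using bp by (intro divide_right_mono) auto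
    then have "a \<bullet> (zs - z) / t / \<beta> \<le> ?kJ z - jz" using bp by simp
    moreover have "g \<bullet> (z - zs) = a \<bullet> (zs - z) / t / \<beta>"
      unfolding g_def by (simp add: inner_diff_right algebra_simps diff_divide_distrib)
    ultimately show "?kJ zs + g \<bullet> (z - zs) \<le> ?kJ z" unfolding jz_def by simp
  qed
  show ?thesis using gK gJ unfolding zs_def by blast
qed

end


definition F1f :: "('a::euclidean_space \<Rightarrow> ereal) \<Rightarrow> ('a \<Rightarrow> ereal) \<Rightarrow> real \<Rightarrow> 'a \<Rightarrow> 'a \<Rightarrow> ereal" where
  "F1f J H t x v = ereal t * bregman (fconj H) ((1 / t) *\<^sub>R x) v + fconj J (egrad (fconj H) v)"

lemma fconj_scale:
  fixes H :: "'a::euclidean_space \<Rightarrow> ereal"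
  assumes t: "t > 0" and pH: "proper_fun H"
  shows "fconj (\<lambda>y. ereal t * H y) x = ereal t * fconj H ((1 / t) *\<^sub>R x)"
proof (rule antisym)
  let ?x' = "(1 / t) *\<^sub>R x"
  show "fconj (\<lambda>y. ereal t * H y) x \<le> ereal t * fconj H ?x'"
  proof (rule fconj_least)
    fix y
    show "ereal (x \<bullet> y) - ereal t * H y \<le> ereal t * fconj H ?x'"
    proof (cases "H y")
      case (real h)
      have "ereal (?x' \<bullet> y - h) \<le> fconj H ?x'" using fconj_upper[of ?x' y H] real by simp
      then have "ereal t * ereal (?x' \<bullet> y - h) \<le> ereal t * fconj H ?x'"
        using t by (intro ereal_mult_left_mono) auto
      moreover have "t * (?x' \<bullet> y - h) = x \<bullet> y - t * h" using t by (simp add: algebra_simps)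
      ultimately show ?thesis using real by simp
    next
      case PInf then show ?thesis using t by simp
    qed (use pH in \<open>auto simp: proper_fun_def\<close>)
  qed
  let ?c = "fconj (\<lambda>y. ereal t * H y) x"
  have nm: "?c \<noteq> -\<infinity>"
  proof -
    obtain y0 where y0: "H y0 < \<infinity>" using pH unfolding proper_fun_def edom_def by auto
    then obtain h where h: "H y0 = ereal h" using pH unfolding proper_fun_def by (cases "H y0") auto
    have "ereal (x \<bullet> y0) - ereal t * H y0 \<le> ?c" by (rule fconj_upper)
    then show ?thesis using h by auto
  qed
  show "ereal t * fconj H ?x' \<le> ?c"
  proof (cases ?c)
    case PInf then show ?thesis by simp
  next
    case MInf then show ?thesis using nm by simp
  next
    case (real c)
    have "fconj H ?x' \<le> ereal (c / t)"
    proof (rule fconj_least)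
      fix y
      show "ereal (?x' \<bullet> y) - H y \<le> ereal (c / t)"
      proof (cases "H y")
        case (real h)
        have "ereal (x \<bullet> y) - ereal t * H y \<le> ?c" by (rule fconj_upper)
        then have "x \<bullet> y - t * h \<le> c" using real \<open>?c = ereal c\<close> by simp
        then have "(x \<bullet> y - t * h) / t \<le> c / t" using t by (intro divide_right_mono) auto
        then show ?thesis using real t by (simp add: field_simps)
      qed (use pH in \<open>auto simp: proper_fun_def\<close>)
    qed
    then have "ereal t * fconj H ?x' \<le> ereal t * ereal (c / t)" using t by (intro ereal_mult_left_mono) auto
    then show ?thesis using real t by simp
  qed
qed

context
  fixes J H :: "'a::euclidean_space \<Rightarrow> ereal" and t :: real and x :: 'a
  assumes JG: "J \<in> Gamma0" and Jcoer: "one_coercive J"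
    and HG: "H \<in> Gamma0" and Hleg: "legendre H"
    and t: "t > 0"
    and x1: "x \<in> {a + t *\<^sub>R b | a b. a \<in> edom J \<and> b \<in> interior (edom (fconj H))}"
    and x2: "x \<in> (\<lambda>b. t *\<^sub>R b) ` edom (fconj H)"
begin

lemmas Jp = J_proper[OF JG Jcoer HG Hleg t x1]
lemmas Kpr = Kp[OF JG Jcoer HG Hleg t x1]
lemmas Kcv = K_econvex[OF HG Hleg]
lemmas Kuq = K_subgrad_unique[OF HG Hleg]

lemma intK_ne: "interior (edom (fconj H)) \<noteq> {}" using x1 by auto

lemma Kgrad:
  assumes w: "w \<in> interior (edom (fconj H))"
  shows "egrad (fconj H) w \<in> subdiff (fconj H) w"
proof -
  obtain u where u: "u \<in> subdiff (fconj H) w" using subgrad_interior[OF Kpr Kcv w] by blast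
  have "((\<lambda>y. real_of_ereal (fconj H y)) has_derivative (\<lambda>h. u \<bullet> h)) (at w)"
    by (rule diff_unique_subgrad[OF Kpr Kcv w u]) (rule Kuq)
  then have "egrad (fconj H) w = u" by (rule egrad_eq)
  then show ?thesis using u by simp
qed

lemma Kint:
  assumes u: "u \<in> subdiff (fconj H) v"
  shows "v \<in> interior (edom (fconj H))" and "egrad (fconj H) v = u"
proof -
  show vi: "v \<in> interior (edom (fconj H))"
    by (rule interior_of_subgrad[OF Kpr Kcv intK_ne u]) (rule Kuq[OF _ u])
  show "egrad (fconj H) v = u" using Kgrad[OF vi] u by (rule Kuq)
qed


lemma main_facts:
  assumes vmin: "\<And>w. F2f J H t x vs \<le> F2f J H t x w"
  shows "vs \<in> interior (edom (fconj H))"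
    and "\<forall>w\<in>interior (edom (fconj H)). F1f J H t x vs \<le> F1f J H t x w"
    and "\<forall>u\<in>interior (edom (fconj H)). (\<forall>w\<in>interior (edom (fconj H)). F1f J H t x u \<le> F1f J H t x w) \<longrightarrow> u = vs"
    and "F1f J H t x vs + F2f J H t x vs = ereal t * fconj H ((1 / t) *\<^sub>R x)"
proof -
  let ?K = "fconj H" and ?kK = "\<lambda>v. real_of_ereal (fconj H v)"
  obtain g where gK: "g \<in> subdiff ?K vs" and gJ: "g \<in> subdiff J (x - t *\<^sub>R vs)"
    using F2_min_subgrad[OF JG Jcoer HG Hleg t x1 vmin] by blast
  show vsI: "vs \<in> interior (edom ?K)" by (rule Kint(1)[OF gK])
  have eg: "egrad ?K vs = g" by (rule Kint(2)[OF gK])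
  define x' where "x' = (1 / t) *\<^sub>R x"
  have x'K: "x' \<in> edom ?K" using x2 t unfolding x'_def by auto
  define kx where "kx = ?kK x'"
  have Kx: "?K x' = ereal kx" using proper_fin[OF Kpr x'K] kx_def by simp
  define zs where "zs = x - t *\<^sub>R vs"
  have zsJ: "zs \<in> edom J" using gJ unfolding subdiff_def zs_def by auto
  define jz where "jz = real_of_ereal (J zs)"
  have Jz: "J zs = ereal jz" using proper_fin[OF Jp zsJ] jz_def by simp
  have vsK: "vs \<in> edom ?K" using gK unfolding subdiff_def by auto
  define kv where "kv = ?kK vs"
  have Kv: "?K vs = ereal kv" using proper_fin[OF Kpr vsK] kv_def by simp
  have tx': "t * (p \<bullet> x') = p \<bullet> x" for p using t unfolding x'_def by simp
  have gJi: "\<And>y. J zs + ereal (g \<bullet> (y - zs)) \<le> J y" using gJ unfolding subdiff_def zs_def by auto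
  have Jg: "fconj J g = ereal (g \<bullet> zs - jz)"
  proof (rule antisym)
    show "fconj J g \<le> ereal (g \<bullet> zs - jz)"
    proof (rule fconj_least)
      fix y show "ereal (g \<bullet> y) - J y \<le> ereal (g \<bullet> zs - jz)"
        using gJi[of y] Jz by (cases "J y") (auto simp: inner_diff_right)
    qed
    show "ereal (g \<bullet> zs - jz) \<le> fconj J g" using fconj_upper[of g zs J] Jz by simp
  qed
  have F1form: "F1f J H t x w = ereal (t * (kx - ?kK w - egrad ?K w \<bullet> (x' - w))) + fconj J (egrad ?K w)"
    if w: "w \<in> interior (edom ?K)" for w
  proof -
    have wK: "w \<in> edom ?K" using w interior_subset by blast
    have "bregman ?K x' w = ereal (kx - ?kK w - egrad ?K w \<bullet> (x' - w))"
      unfolding bregman_def using Kx by (subst proper_fin[OF Kpr wK]) simp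
    then show ?thesis unfolding F1f_def x'_def by simp
  qed
  define m where "m = t * kx - jz - t * kv"
  have F1vs: "F1f J H t x vs = ereal m"
  proof -
    have "F1f J H t x vs = ereal (t * (kx - kv - g \<bullet> (x' - vs)) + (g \<bullet> zs - jz))"
      using F1form[OF vsI] eg Jg kv_def by simp
    also have "t * (kx - kv - g \<bullet> (x' - vs)) + (g \<bullet> zs - jz) = m"
      unfolding m_def zs_def using tx'[of g] by (simp add: inner_diff_right algebra_simps)
    finally show ?thesis .
  qed
  have F2vs: "F2f J H t x vs = ereal (jz + t * kv)"
    using F2_real[OF JG Jcoer HG Hleg t x1, of vs] zsJ vsK unfolding zs_def jz_def kv_def by simp
  show "F1f J H t x vs + F2f J H t x vs = ereal t * fconj H ((1 / t) *\<^sub>R x)"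
    using F1vs F2vs Kx unfolding m_def x'_def by simp
  define D where "D w = egrad ?K w \<bullet> w - ?kK w - egrad ?K w \<bullet> vs + kv" for w
  have Dge: "D w \<ge> 0" and F1ge: "ereal (m + t * D w) \<le> F1f J H t x w"
    and Hu: "H (egrad ?K w) = ereal (egrad ?K w \<bullet> w - ?kK w)"
    if w: "w \<in> interior (edom ?K)" for w
  proof -
    let ?u = "egrad ?K w"
    have uK: "?u \<in> subdiff ?K w" by (rule Kgrad[OF w])
    show Hu: "H ?u = ereal (?u \<bullet> w - ?kK w)" by (rule K_subgrad_dual(1)[OF HG Hleg uK])
    have "ereal (?u \<bullet> vs) - H ?u \<le> ?K vs" by (rule FY[OF HG Hleg])
    then have "?u \<bullet> vs - (?u \<bullet> w - ?kK w) \<le> kv" using Hu Kv by simp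
    then show "D w \<ge> 0" unfolding D_def by simp
    have Jl: "ereal (?u \<bullet> zs - jz) \<le> fconj J ?u" using fconj_upper[of ?u zs J] Jz by simp
    have "ereal (t * (kx - ?kK w - ?u \<bullet> (x' - w))) + ereal (?u \<bullet> zs - jz) \<le> F1f J H t x w"
      unfolding F1form[OF w] using Jl by (intro add_mono) auto
    moreover have "t * (kx - ?kK w - ?u \<bullet> (x' - w)) + (?u \<bullet> zs - jz) = m + t * D w"
      unfolding m_def D_def zs_def using tx'[of ?u] by (simp add: inner_diff_right algebra_simps)
    ultimately show "ereal (m + t * D w) \<le> F1f J H t x w" by simp
  qed
  show "\<forall>w\<in>interior (edom ?K). F1f J H t x vs \<le> F1f J H t x w"
  proof
    fix w assume w: "w \<in> interior (edom ?K)"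
    have "ereal m \<le> ereal (m + t * D w)" using Dge[OF w] t by simp
    from order_trans[OF this F1ge[OF w]] show "F1f J H t x vs \<le> F1f J H t x w" using F1vs by simp
  qed
  show "\<forall>u\<in>interior (edom ?K). (\<forall>w\<in>interior (edom ?K). F1f J H t x u \<le> F1f J H t x w) \<longrightarrow> u = vs"
  proof (intro ballI impI)
    fix u assume u: "u \<in> interior (edom ?K)" and umin: "\<forall>w\<in>interior (edom ?K). F1f J H t x u \<le> F1f J H t x w"
    let ?uu = "egrad ?K u"
    have "ereal (m + t * D u) \<le> ereal m" using F1ge[OF u] umin vsI F1vs by (metis order_trans)
    then have "t * D u \<le> 0" by simp
    then have D0: "D u = 0" using Dge[OF u] t by (simp add: mult_le_0_iff)
    have uK: "?uu \<in> subdiff ?K u" by (rule Kgrad[OF u])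
    have uuI: "?uu \<in> interior (edom H)" by (rule K_subgrad_dual(2)[OF HG Hleg uK])
    have us: "u \<in> subdiff H ?uu" by (rule K_subgrad_dual(3)[OF HG Hleg uK])
    have Huu: "H ?uu = ereal (?uu \<bullet> vs - kv)" using Hu[OF u] D0 unfolding D_def by simp
    have vss: "vs \<in> subdiff H ?uu"
      unfolding subdiff_def
    proof (intro CollectI conjI allI)
      show "?uu \<in> edom H" using Huu unfolding edom_def by simp
      fix y
      have "ereal (y \<bullet> vs) - H y \<le> ereal kv" using FY[OF HG Hleg, of y vs] Kv by simp
      then show "H ?uu + ereal (vs \<bullet> (y - ?uu)) \<le> H y" using Huu
        by (cases "H y") (auto simp: inner_diff_right inner_commute)
    qed
    have "subdiff H ?uu = {egrad H ?uu}" using Hleg uuI unfolding legendre_def by blast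
    then show "u = vs" using us vss by auto
  qed
qed

end


theorem proposition3p1:
  fixes J H :: "'a::euclidean_space \<Rightarrow> ereal" and t :: real and x :: 'a
  assumes J: "J \<in> Gamma0" and Jcoer: "one_coercive J"
    and H: "H \<in> Gamma0" and Hleg: "legendre H"
    and t: "t > 0"
    and x1: "x \<in> {a + t *\<^sub>R b | a b. a \<in> edom J \<and> b \<in> interior (edom (fconj H))}"
    and x2: "x \<in> (\<lambda>b. t *\<^sub>R b) ` edom (fconj H)"
  defines "F1 \<equiv> (\<lambda>v. ereal t * bregman (fconj H) ((1 / t) *\<^sub>R x) v + fconj J (egrad (fconj H) v))"
    and "F2 \<equiv> (\<lambda>v. J (x - t *\<^sub>R v) + ereal t * fconj H v)"
  shows "\<exists>v. v \<in> interior (edom (fconj H))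
      \<and> (\<forall>w\<in>interior (edom (fconj H)). F1 v \<le> F1 w)
      \<and> (\<forall>u\<in>interior (edom (fconj H)). (\<forall>w\<in>interior (edom (fconj H)). F1 u \<le> F1 w) \<longrightarrow> u = v)
      \<and> (\<forall>w. F2 v \<le> F2 w)
      \<and> (\<forall>u. (\<forall>w. F2 u \<le> F2 w) \<longrightarrow> u = v)
      \<and> F1 v + F2 v = fconj (\<lambda>y. ereal t * H y) x
      \<and> fconj (\<lambda>y. ereal t * H y) x = ereal t * fconj H ((1 / t) *\<^sub>R x)"
proof -
  have F1eq: "F1 = F1f J H t x" unfolding F1_def F1f_def by (rule refl)
  have F2eq: "F2 = F2f J H t x" unfolding F2_def F2f_def by (rule refl)
  obtain vs where vmin: "\<And>w. F2f J H t x vs \<le> F2f J H t x w"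
    using F2_min_exists[OF J Jcoer H Hleg t x1] by blast
  note mf = main_facts[OF J Jcoer H Hleg t x1 x2 vmin]
  have pH: "proper_fun H" using H unfolding Gamma0_def by blast
  have sc: "fconj (\<lambda>y. ereal t * H y) x = ereal t * fconj H ((1 / t) *\<^sub>R x)"
    by (rule fconj_scale[OF t pH])
  have F2u: "u = vs" if u: "\<forall>w. F2f J H t x u \<le> F2f J H t x w" for u
  proof -
    have um: "\<And>w. F2f J H t x u \<le> F2f J H t x w" using u by blast
    note mu = main_facts[OF J Jcoer H Hleg t x1 x2 um]
    from mf(3) mu(1) have "(\<forall>w\<in>interior (edom (fconj H)). F1f J H t x u \<le> F1f J H t x w) \<longrightarrow> u = vs"
      by (rule bspec)
    then show ?thesis using mu(2) by (rule mp)
  qed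
  show ?thesis unfolding F1eq F2eq
  proof (intro exI[of _ vs] conjI)
    show "vs \<in> interior (edom (fconj H))" by (rule mf(1))
    show "\<forall>w\<in>interior (edom (fconj H)). F1f J H t x vs \<le> F1f J H t x w" by (rule mf(2))
    show "\<forall>u\<in>interior (edom (fconj H)). (\<forall>w\<in>interior (edom (fconj H)). F1f J H t x u \<le> F1f J H t x w) \<longrightarrow> u = vs"
      by (rule mf(3))
    show "\<forall>w. F2f J H t x vs \<le> F2f J H t x w" using vmin by (rule allI)
    show "\<forall>u. (\<forall>w. F2f J H t x u \<le> F2f J H t x w) \<longrightarrow> u = vs" using F2u by (intro allI impI)
    show "F1f J H t x vs + F2f J H t x vs = fconj (\<lambda>y. ereal t * H y) x" using mf(4) sc by simp
    show "fconj (\<lambda>y. ereal t * H y) x = ereal t * fconj H ((1 / t) *\<^sub>R x)" by (rule sc)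
  qed
qed


end
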